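(* Let $G$ be a countable group that is not locally finite. Then for every $n\ge1$ there is a fair polytile $(T_1,\dots,T_k)$ of $G$ with $|T_1|=n$. Furthermore, if $F\subseteq G$ is finite then for all sufficiently large $n$ there is a fair polytile $(T_1,\dots,T_k)$ of $G$ with $F\subseteq T_1$ and $|T_1|=n$.
   Context: A group is locally finite if every finite subset generates a finite subgroup. For a countable group $G$, a tuple $(T_1,\dots,T_k)$ of finite subsets of $G$, each containing $1_G$, is a polytile if there are non-empty sets $\Delta_1,\dots,\Delta_k\subseteq G$ such that $G$ is the disjoint union $\coprod_{1\le i\le k,\ \delta\in\Delta_i}\delta T_i$. It is fair if all $T_i$ have the same cardinality. *)

theory Defs
  imports "HOL-Algebra.Algebra" "HOL-Library.Countable_Set"
begin

definition locally_finite_group :: "('a, 'b) monoid_scheme \<Rightarrow> bool" where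
  "locally_finite_group G \<longleftrightarrow>
     (\<forall>S. S \<subseteq> carrier G \<and> finite S \<longrightarrow> finite (generate G S))"

text \<open>A tuple (T_1,...,T_k) is represented as a list Ts = [T_1,...,T_k] (T_1 = Ts!0).\<close>
definition polytile :: "('a, 'b) monoid_scheme \<Rightarrow> 'a set list \<Rightarrow> bool" where
  "polytile G Ts \<longleftrightarrow>
     Ts \<noteq> [] \<and>
     (\<forall>T\<in>set Ts. finite T \<and> T \<subseteq> carrier G \<and> \<one>\<^bsub>G\<^esub> \<in> T) \<and>
     (\<exists>\<Delta> :: nat \<Rightarrow> 'a set.
        (\<forall>i<length Ts. \<Delta> i \<noteq> {} \<and> \<Delta> i \<subseteq> carrier G) \<and>
        (\<Union>i<length Ts. \<Union>\<delta>\<in>\<Delta> i. l_coset G \<delta> (Ts ! i)) = carrier G \<and>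
        (\<forall>i<length Ts. \<forall>j<length Ts. \<forall>\<delta>\<in>\<Delta> i. \<forall>\<delta>'\<in>\<Delta> j.
            (i, \<delta>) \<noteq> (j, \<delta>') \<longrightarrow>
            l_coset G \<delta> (Ts ! i) \<inter> l_coset G \<delta>' (Ts ! j) = {}))"

definition fair :: "'a set list \<Rightarrow> bool" where
  "fair Ts \<longleftrightarrow> (\<forall>T\<in>set Ts. \<forall>T'\<in>set Ts. card T = card T')"

end

theory Submission
  imports Defs "HOL-Library.Disjoint_Sets"
begin


lemma div_bounds_nat: "(x::nat) div n = m \<Longrightarrow> n \<ge> 1 \<Longrightarrow> m * n \<le> x \<and> x < m * n + n"
proof -
  assume a: "x div n = m" "n \<ge> 1"
  have "x = m * n + x mod n" using a(1) by (metis div_mult_mod_eq mult.commute)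
  moreover have "x mod n < n" using a(2) by simp
  ultimately show ?thesis by linarith
qed

lemma combine:
  fixes A :: "nat \<Rightarrow> 'a set" and n :: nat
  assumes n: "n \<ge> 1" and fin: "\<And>i. finite (A i)" and ne: "\<And>i. A i \<noteq> {}"
    and dj: "\<And>i j. i \<noteq> j \<Longrightarrow> A i \<inter> A j = {}"
  shows "\<exists>P. (\<forall>B\<in>P. card B = n \<and> (\<exists>i. \<forall>y\<in>B. \<exists>k. i \<le> k \<and> k \<le> i + n \<and> y \<in> A k))
             \<and> disjoint P \<and> \<Union>P = (\<Union>i. A i) \<and> (card (A 0) \<le> n \<longrightarrow> (\<exists>B\<in>P. A 0 \<subseteq> B))"
proof -
  define s where "s i = (\<Sum>k<i. card (A k))" for i
  have s_Suc: "s (Suc i) = s i + card (A i)" for i by (simp add: s_def)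
  have cpos: "card (A i) \<ge> 1" for i using fin ne by (simp add: Suc_leI card_gt_0_iff)
  have s_ge: "s i + (j - i) \<le> s j" if "i \<le> j" for i j
    using that
  proof (induction j)
    case 0 then show ?case by simp
  next
    case (Suc j)
    show ?case
    proof (cases "i = Suc j")
      case True then show ?thesis by simp
    next
      case False
      then have "i \<le> j" using Suc.prems by simp
      then have "s i + (j - i) \<le> s j" using Suc.IH by simp
      then show ?thesis using s_Suc[of j] cpos[of j] \<open>i \<le> j\<close> by simp
    qed
  qed
  have s0: "s 0 = 0" by (simp add: s_def)
  have "\<forall>i. \<exists>f. bij_betw f (A i) {s i..<s (Suc i)}"
  proof
    fix i
    show "\<exists>f. bij_betw f (A i) {s i..<s (Suc i)}"
      by (rule finite_same_card_bij) (use fin s_Suc in auto)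
  qed
  then obtain gg where gg: "\<And>i. bij_betw (gg i) (A i) {s i..<s (Suc i)}" by metis
  define idx where "idx y = (THE i. y \<in> A i)" for y
  have idx: "idx y = i" if "y \<in> A i" for y i
    unfolding idx_def using that dj by (intro the_equality) auto
  define g where "g y = gg (idx y) y" for y
  define U where "U = (\<Union>i. A i)"
  have g_in: "s i \<le> g y \<and> g y < s (Suc i)" if "y \<in> A i" for y i
    using gg[of i] that idx[OF that] unfolding g_def bij_betw_def by auto
  have smono: "s (Suc i) \<le> s j" if "i < j" for i j using s_ge[of "Suc i" j] that by simp
  have g_inj: "inj_on g U"
  proof (rule inj_onI)
    fix x y assume x: "x \<in> U" and y: "y \<in> U" and e: "g x = g y"
    obtain i where i: "x \<in> A i" using x U_def by auto
    obtain j where j: "y \<in> A j" using y U_def by auto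
    have "i = j"
    proof (rule ccontr)
      assume "i \<noteq> j"
      then have "i < j \<or> j < i" by auto
      then show False
      proof
        assume "i < j" then have "s (Suc i) \<le> s j" by (rule smono)
        then show False using g_in[OF i] g_in[OF j] e by linarith
      next
        assume "j < i" then have "s (Suc j) \<le> s i" by (rule smono)
        then show False using g_in[OF i] g_in[OF j] e by linarith
      qed
    qed
    then show "x = y" using gg[of i] i j e idx[OF i] idx[OF j] unfolding g_def bij_betw_def inj_on_def
      by auto
  qed
  have g_surj: "\<exists>y\<in>U. g y = m" for m
  proof -
    have "m < s (Suc m)" using s_ge[of 0 "Suc m"] s0 by auto
    then have ex: "\<exists>i. m < s (Suc i)" by blast
    define i where "i = (LEAST i. m < s (Suc i))"
    have i1: "m < s (Suc i)" unfolding i_def by (rule LeastI_ex[OF ex])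
    have i2: "s i \<le> m"
    proof (cases i)
      case 0 then show ?thesis by (simp add: s0)
    next
      case (Suc i')
      have "\<not> m < s (Suc i')" using Least_le[of "\<lambda>i. m < s (Suc i)" i'] Suc unfolding i_def
        by (metis Suc_n_not_le_n)
      then show ?thesis using Suc by simp
    qed
    have "m \<in> gg i ` A i" using gg[of i] i1 i2 unfolding bij_betw_def by auto
    then obtain y where y: "y \<in> A i" "gg i y = m" by auto
    then show ?thesis using idx[OF y(1)] unfolding g_def U_def by auto
  qed
  define blk where "blk m = {y \<in> U. g y div n = m}" for m
  have gblk: "g ` blk m = {m * n..<m * n + n}" for m
  proof
    show "g ` blk m \<subseteq> {m * n..<m * n + n}" using div_bounds_nat n unfolding blk_def by auto
  next
    show "{m * n..<m * n + n} \<subseteq> g ` blk m"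
    proof
      fix x assume x: "x \<in> {m * n..<m * n + n}"
      obtain y where y: "y \<in> U" "g y = x" using g_surj by blast
      have "x div n = m" using x n by (intro div_nat_eqI) (auto simp: mult.commute)
      then show "x \<in> g ` blk m" using y unfolding blk_def by auto
    qed
  qed
  have card_blk: "card (blk m) = n" for m
  proof -
    have "inj_on g (blk m)" using g_inj unfolding blk_def by (rule inj_on_subset) auto
    then have "card (blk m) = card (g ` blk m)" by (simp add: card_image)
    then show ?thesis using gblk by simp
  qed
  have bound: "k' \<le> k + n" if "y \<in> A k" "y' \<in> A k'" "y \<in> blk m" "y' \<in> blk m" for y y' k k' m
  proof (cases "k < k'")
    case True
    have "g y div n = m" "g y' div n = m" using that(3,4) unfolding blk_def by auto
    then have "m * n \<le> g y" "g y' < m * n + n" using div_bounds_nat[OF _ n] by blast+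
    moreover have "g y < s (Suc k)" "s k' \<le> g y'" using g_in that by auto
    moreover have "s (Suc k) + (k' - Suc k) \<le> s k'" using s_ge True by simp
    ultimately show ?thesis by linarith
  next
    case False then show ?thesis by simp
  qed
  show ?thesis
  proof (intro exI[of _ "range blk"] conjI ballI impI)
    fix B assume "B \<in> range blk"
    then obtain m where B: "B = blk m" by auto
    show "card B = n" using B card_blk by simp
    have Bne: "B \<noteq> {}" using card_blk[of m] B n by auto
    have "finite B" using card_blk[of m] B n by (intro card_ge_0_finite) simp
    then have finI: "finite (idx ` B)" by simp
    define i where "i = Min (idx ` B)"
    have "i \<in> idx ` B" unfolding i_def using finI Bne by simp
    then obtain y0 where y0: "y0 \<in> B" "idx y0 = i" by auto
    have y0A: "y0 \<in> A i" using y0 B unfolding blk_def U_def using idx by auto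
    show "\<exists>i. \<forall>y\<in>B. \<exists>k. i \<le> k \<and> k \<le> i + n \<and> y \<in> A k"
    proof (rule exI[of _ i], intro ballI)
      fix y assume y: "y \<in> B"
      then obtain k where k: "y \<in> A k" using B unfolding blk_def U_def by auto
      have "i \<le> k" using idx[OF k] y finI unfolding i_def by (metis Min_le image_eqI)
      moreover have "k \<le> i + n" using bound[OF y0A k] y0 y B by auto
      ultimately show "\<exists>k. i \<le> k \<and> k \<le> i + n \<and> y \<in> A k" using k by auto
    qed
  next
    show "disjoint (range blk)"
      unfolding disjoint_def blk_def by auto
  next
    show "\<Union>(range blk) = (\<Union>i. A i)"
      unfolding blk_def U_def by auto
  next
    assume c: "card (A 0) \<le> n"
    have "A 0 \<subseteq> blk 0"
    proof
      fix y assume y: "y \<in> A 0"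
      have "g y < n" using g_in[OF y] s_Suc[of 0] s0 c by simp
      then show "y \<in> blk 0" using y unfolding blk_def U_def by auto
    qed
    then show "\<exists>B\<in>range blk. A 0 \<subseteq> B" by auto
  qed
qed



lemma subset_top:
  fixes f :: "'a \<Rightarrow> nat"
  shows "finite Xs \<Longrightarrow> n \<le> card Xs \<Longrightarrow> \<exists>P. P \<subseteq> Xs \<and> card P = n \<and> (\<forall>y\<in>P. \<forall>z\<in>Xs. f y < f z \<longrightarrow> z \<in> P)"
proof (induction "card Xs" arbitrary: Xs rule: less_induct)
  case less
  show ?case
  proof (cases "card Xs = n")
    case True then show ?thesis by (intro exI[of _ Xs]) auto
  next
    case False
    then have "card Xs > n" using less.prems by simp
    then have Xne: "Xs \<noteq> {}" by auto
    define m0 where "m0 = Min (f ` Xs)"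
    have "m0 \<in> f ` Xs" unfolding m0_def using less.prems Xne by simp
    then obtain m where m: "m \<in> Xs" "f m = m0" by auto
    have mmin: "f m \<le> f z" if "z \<in> Xs" for z using that less.prems(1) m unfolding m0_def by simp
    have c: "card (Xs - {m}) < card Xs" using m less.prems(1) by (metis card_Diff1_less)
    have "n \<le> card (Xs - {m})" using \<open>card Xs > n\<close> m less.prems(1) by simp
    then obtain P where P: "P \<subseteq> Xs - {m}" "card P = n" "\<forall>y\<in>P. \<forall>z\<in>Xs - {m}. f y < f z \<longrightarrow> z \<in> P"
      using less.hyps[OF c] less.prems(1) by blast
    show ?thesis
    proof (intro exI[of _ P] conjI ballI impI)
      fix y z assume y: "y \<in> P" and z: "z \<in> Xs" and lt: "f y < f z"
      have "z \<noteq> m" using mmin[of y] y P(1) lt by auto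
      then show "z \<in> P" using P(3) y z lt by auto
    qed (use P in auto)
  qed
qed

locale ptree =
  fixes V Q :: "'a set" and p :: "'a \<Rightarrow> 'a" and lv :: "'a \<Rightarrow> nat"
  assumes p_in: "x \<in> V \<Longrightarrow> p x \<in> V"
    and Q_sub: "Q \<subseteq> V" and Q_fin: "finite Q"
    and p_Q: "x \<in> Q \<Longrightarrow> p x = x"
    and lv0: "x \<in> V \<Longrightarrow> lv x = 0 \<longleftrightarrow> x \<in> Q"
    and lv_p: "x \<in> V \<Longrightarrow> x \<notin> Q \<Longrightarrow> Suc (lv (p x)) = lv x"
    and ch_fin: "v \<in> V \<Longrightarrow> finite {x \<in> V. p x = v}"
    and V_inf: "infinite V"
begin

lemma pw_in: "x \<in> V \<Longrightarrow> (p^^k) x \<in> V"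
  by (induction k) (auto intro: p_in)

lemma lv_pw: "x \<in> V \<Longrightarrow> lv ((p^^k) x) = lv x - k"
proof (induction k)
  case 0 then show ?case by simp
next
  case (Suc k)
  define z where "z = (p^^k) x"
  have z: "z \<in> V" using pw_in Suc.prems z_def by simp
  show ?case
  proof (cases "z \<in> Q")
    case True
    then have "lv z = 0" using lv0 z by simp
    then show ?thesis using True p_Q Suc z_def by simp
  next
    case False
    then show ?thesis using lv_p[OF z False] Suc z_def by simp
  qed
qed

lemma pw_Q: "x \<in> V \<Longrightarrow> lv x \<le> k \<Longrightarrow> (p^^k) x \<in> Q"
  using lv_pw[of x k] lv0[OF pw_in[of x k]] by simp

lemma pw_Q_fix: "x \<in> Q \<Longrightarrow> (p^^k) x = x"
  by (induction k) (auto simp: p_Q)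

lemma pw_add: "(p^^(i+j)) x = (p^^i) ((p^^j) x)"
  by (simp add: funpow_add)

definition desc :: "'a \<Rightarrow> 'a set" where
  "desc v = {y \<in> V. \<exists>k. (p^^k) y = v}"

lemma desc_char: assumes "v \<in> V"
  shows "y \<in> desc v \<longleftrightarrow> y \<in> V \<and> lv v \<le> lv y \<and> (p^^(lv y - lv v)) y = v"
proof
  assume "y \<in> desc v"
  then obtain k where y: "y \<in> V" and k: "(p^^k) y = v" unfolding desc_def by auto
  have lvv: "lv v = lv y - k" using lv_pw[OF y, of k] k by simp
  show "y \<in> V \<and> lv v \<le> lv y \<and> (p^^(lv y - lv v)) y = v"
  proof (cases "v \<in> Q")
    case False
    then have "lv v > 0" using lv0 assms by auto
    then have "lv y - lv v = k" using lvv by simp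
    then show ?thesis using y k lvv by simp
  next
    case True
    then have l0: "lv v = 0" using lv0 assms by simp
    have "(p^^(lv y)) y = v"
    proof (cases "k \<le> lv y")
      case True
      have "(p^^(lv y)) y = (p^^(lv y - k)) ((p^^k) y)"
        using True pw_add[of "lv y - k" k y] by simp
      then show ?thesis using k \<open>v \<in> Q\<close> pw_Q_fix by simp
    next
      case False
      have "(p^^k) y = (p^^(k - lv y)) ((p^^(lv y)) y)"
        using False pw_add[of "k - lv y" "lv y" y] by simp
      moreover have "(p^^(lv y)) y \<in> Q" using pw_Q y by simp
      ultimately show ?thesis using k pw_Q_fix by simp
    qed
    then show ?thesis using y l0 by simp
  qed
next
  assume "y \<in> V \<and> lv v \<le> lv y \<and> (p^^(lv y - lv v)) y = v"
  then show "y \<in> desc v" unfolding desc_def by auto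
qed

lemma desc_V: "desc v \<subseteq> V" unfolding desc_def by auto

lemma desc_self: assumes "v \<in> V" shows "v \<in> desc v"
proof -
  have "(p^^0) v = v" by simp
  then show ?thesis using assms unfolding desc_def by blast
qed

lemma desc_trans: assumes "y \<in> desc v" "v \<in> desc w" shows "y \<in> desc w"
proof -
  obtain k1 where k1: "y \<in> V" "(p^^k1) y = v" using assms(1) unfolding desc_def by auto
  obtain k2 where k2: "(p^^k2) v = w" using assms(2) unfolding desc_def by auto
  have "(p^^(k2+k1)) y = w" using k1 k2 pw_add[of k2 k1 y] by simp
  then show ?thesis using k1 unfolding desc_def by blast
qed

lemma desc_pw: "y \<in> V \<Longrightarrow> y \<in> desc ((p^^k) y)"
  unfolding desc_def by blast

lemma desc_p: "y \<in> V \<Longrightarrow> y \<in> desc (p y)"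
  using desc_pw[of y 1] by simp

lemma desc_lv: "v \<in> V \<Longrightarrow> y \<in> desc v \<Longrightarrow> lv v \<le> lv y"
  using desc_char[of v y] by simp

lemma anc_unique:
  assumes "v \<in> V" "v' \<in> V" "y \<in> desc v" "y \<in> desc v'" "lv v = lv v'"
  shows "v = v'"
proof -
  have e1: "(p^^(lv y - lv v)) y = v" using desc_char[OF assms(1)] assms(3) by blast
  have e2: "(p^^(lv y - lv v')) y = v'" using desc_char[OF assms(2)] assms(4) by blast
  show ?thesis using e1 e2 assms(5) by metis
qed

lemma anc_nested:
  assumes "v \<in> V" "w \<in> V" "y \<in> desc v" "y \<in> desc w" "lv v \<le> lv w"
  shows "w \<in> desc v"
proof -
  have y: "y \<in> V" "lv w \<le> lv y" "(p^^(lv y - lv w)) y = w" using desc_char[OF assms(2)] assms(4) by blast+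
  have "(p^^(lv y - lv v)) y = v" using desc_char[OF assms(1)] assms(3) by blast
  moreover have "(p^^(lv y - lv v)) y = (p^^(lv w - lv v)) ((p^^(lv y - lv w)) y)"
    using y assms(5) pw_add[of "lv w - lv v" "lv y - lv w" y] by simp
  ultimately have "(p^^(lv w - lv v)) w = v" using y(3) by simp
  then show ?thesis using assms(2) unfolding desc_def by blast
qed

definition ch :: "'a \<Rightarrow> 'a set" where
  "ch v = {c \<in> V. c \<notin> Q \<and> p c = v}"

lemma ch_finite: "v \<in> V \<Longrightarrow> finite (ch v)"
  using ch_fin[of v] unfolding ch_def by (rule finite_subset[rotated]) auto

lemma desc_decomp: assumes v: "v \<in> V" shows "desc v = insert v (\<Union>c\<in>ch v. desc c)"
proof
  show "desc v \<subseteq> insert v (\<Union>c\<in>ch v. desc c)"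
  proof
    fix y assume y: "y \<in> desc v"
    have yy: "y \<in> V" "lv v \<le> lv y" "(p^^(lv y - lv v)) y = v" using desc_char[OF v] y by auto
    show "y \<in> insert v (\<Union>c\<in>ch v. desc c)"
    proof (cases "lv y = lv v")
      case True then show ?thesis using yy by simp
    next
      case False
      define c where "c = (p^^(lv y - lv v - 1)) y"
      have cV: "c \<in> V" using pw_in yy c_def by simp
      have lc: "lv c = lv v + 1" using lv_pw[OF yy(1)] c_def False yy(2) by simp
      then have "c \<notin> Q" using lv0[OF cV] by simp
      moreover have "p c = v"
      proof -
        have "p c = (p^^(Suc (lv y - lv v - 1))) y" unfolding c_def by simp
        also have "Suc (lv y - lv v - 1) = lv y - lv v" using False yy(2) by simp
        finally show ?thesis using yy by simp
      qed
      moreover have "y \<in> desc c" using desc_pw[OF yy(1)] c_def by simp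
      ultimately show ?thesis using cV unfolding ch_def by auto
    qed
  qed
next
  show "insert v (\<Union>c\<in>ch v. desc c) \<subseteq> desc v"
  proof
    fix y assume "y \<in> insert v (\<Union>c\<in>ch v. desc c)"
    then show "y \<in> desc v"
    proof
      assume "y = v" then show ?thesis using desc_self v by simp
    next
      assume "y \<in> (\<Union>c\<in>ch v. desc c)"
      then obtain c where c: "c \<in> ch v" "y \<in> desc c" by auto
      have "c \<in> desc v" using c(1) desc_p[of c] unfolding ch_def by auto
      then show ?thesis using desc_trans c by blast
    qed
  qed
qed

definition K :: "'a set" where
  "K = {v \<in> V. v \<notin> Q \<and> infinite (desc v)}"

lemma K_child: assumes "v \<in> K" shows "\<exists>c\<in>ch v. c \<in> K"
proof (rule ccontr)
  assume nt: "\<not> (\<exists>c\<in>ch v. c \<in> K)"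
  have v: "v \<in> V" using assms K_def by auto
  have "\<forall>c\<in>ch v. finite (desc c)"
  proof
    fix c assume c: "c \<in> ch v"
    then have "c \<in> V" "c \<notin> Q" unfolding ch_def by auto
    moreover have "c \<notin> K" using nt c by blast
    ultimately show "finite (desc c)" unfolding K_def by blast
  qed
  then have "finite (\<Union>c\<in>ch v. desc c)" using ch_finite[OF v] by blast
  then have "finite (desc v)" by (subst desc_decomp[OF v]) simp
  then show False using assms K_def by auto
qed

lemma K_up: assumes "v \<in> K" "p v \<notin> Q" shows "p v \<in> K"
proof -
  have v: "v \<in> V" using assms K_def by auto
  have "desc v \<subseteq> desc (p v)" using desc_trans[OF _ desc_p[OF v]] by blast
  moreover have "infinite (desc v)" using assms K_def by auto
  ultimately have "infinite (desc (p v))" using finite_subset by blast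
  then show ?thesis using assms p_in[OF v] unfolding K_def by auto
qed

lemma V_union: "V = (\<Union>q\<in>Q. desc q)"
proof
  show "V \<subseteq> (\<Union>q\<in>Q. desc q)"
  proof
    fix y assume y: "y \<in> V"
    then have "(p^^(lv y)) y \<in> Q" using pw_Q by simp
    then show "y \<in> (\<Union>q\<in>Q. desc q)" using desc_pw[OF y] by auto
  qed
qed (use desc_V in auto)

lemma Q_child: "\<exists>c. c \<in> K \<and> p c \<in> Q"
proof -
  have "\<exists>q\<in>Q. infinite (desc q)"
  proof (rule ccontr)
    assume "\<not> ?thesis"
    then have "finite (\<Union>q\<in>Q. desc q)" using Q_fin by auto
    then show False using V_union V_inf by simp
  qed
  then obtain q where q: "q \<in> Q" "infinite (desc q)" by auto
  have qV: "q \<in> V" using q Q_sub by auto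
  have "\<exists>c\<in>ch q. infinite (desc c)"
  proof (rule ccontr)
    assume "\<not> ?thesis"
    then have "finite (desc q)" using desc_decomp[OF qV] ch_finite[OF qV] by auto
    then show False using q by simp
  qed
  then obtain c where "c \<in> ch q" "infinite (desc c)" by auto
  then show ?thesis using q unfolding ch_def K_def by auto
qed

lemma desc_fin_noKQ:
  assumes c: "c \<in> V" "c \<notin> Q" "c \<notin> K" and y: "y \<in> desc c"
  shows "y \<notin> K" "y \<notin> Q"
proof -
  have fin: "finite (desc c)" using c K_def by auto
  show "y \<notin> K"
  proof
    assume "y \<in> K"
    have "desc y \<subseteq> desc c" using desc_trans[OF _ y] by blast
    then have "finite (desc y)" using fin finite_subset by blast
    then show False using \<open>y \<in> K\<close> K_def by auto
  qed
  show "y \<notin> Q"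
  proof
    assume "y \<in> Q"
    obtain k where "(p^^k) y = c" using y desc_def by auto
    then have "y = c" using pw_Q_fix[OF \<open>y \<in> Q\<close>] by simp
    then show False using c \<open>y \<in> Q\<close> by simp
  qed
qed

end


context ptree begin

lemma chain_in:
  assumes W: "W \<subseteq> desc v" "v \<in> V" and cl: "\<forall>y\<in>W. y \<noteq> v \<longrightarrow> p y \<in> W" and y: "y \<in> W"
  shows "j \<le> lv y - lv v \<Longrightarrow> (p^^j) y \<in> W"
proof (induction j)
  case 0 then show ?case using y by simp
next
  case (Suc j)
  have yV: "y \<in> V" using y W desc_V by blast
  have in1: "(p^^j) y \<in> W" using Suc by simp
  have "lv ((p^^j) y) = lv y - j" using lv_pw[OF yV] .
  then have "lv ((p^^j) y) \<noteq> lv v" using Suc.prems by simp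
  then have "(p^^j) y \<noteq> v" by metis
  then have "p ((p^^j) y) \<in> W" using cl in1 by blast
  then show ?case by simp
qed

lemma chain_card: assumes "y \<in> V" "d \<le> lv y"
  shows "card ((\<lambda>j. (p^^j) y) ` {0..d}) = Suc d"
proof -
  have "inj_on (\<lambda>j. (p^^j) y) {0..d}"
  proof (rule inj_onI)
    fix i j assume i: "i \<in> {0..d}" and j: "j \<in> {0..d}" and e: "(p^^i) y = (p^^j) y"
    have "lv ((p^^i) y) = lv ((p^^j) y)" using e by simp
    then have "lv y - i = lv y - j" using lv_pw[OF assms(1)] by simp
    then show "i = j" using i j assms(2) by simp
  qed
  then show ?thesis by (simp add: card_image)
qed

lemma carve:
  assumes n: "n \<ge> 1"
  shows "finite W \<Longrightarrow> v \<in> V \<Longrightarrow> W \<subseteq> desc v \<Longrightarrow> (\<forall>y\<in>W. y \<noteq> v \<longrightarrow> p y \<in> W) \<Longrightarrow>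
    \<exists>P R. R \<subseteq> W \<and> card R < n \<and> (\<forall>y\<in>R. lv y < lv v + n) \<and>
      (\<forall>B\<in>P. card B = n \<and> (\<exists>u. \<forall>y\<in>B. \<exists>i<n. (p^^i) y = u)) \<and> disjoint P \<and> \<Union>P = W - R"
proof (induction "card W" arbitrary: W rule: less_induct)
  case less
  note fin = less.prems(1) and vV = less.prems(2) and Wd = less.prems(3) and cl = less.prems(4)
  have WV: "W \<subseteq> V" using Wd desc_V by blast
  show ?case
  proof (cases "card W < n")
    case True
    have "\<forall>y\<in>W. lv y < lv v + n"
    proof
      fix y assume y: "y \<in> W"
      have yV: "y \<in> V" using y WV by blast
      have le: "lv v \<le> lv y" using desc_lv[OF vV] y Wd by blast
      define d where "d = lv y - lv v"
      have "(\<lambda>j. (p^^j) y) ` {0..d} \<subseteq> W"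
        using chain_in[OF Wd vV cl y] d_def by auto
      then have "card ((\<lambda>j. (p^^j) y) ` {0..d}) \<le> card W" using fin by (rule card_mono[rotated])
      then have "Suc d \<le> card W" using chain_card[OF yV, of d] d_def by simp
      then show "lv y < lv v + n" using True le d_def by simp
    qed
    then show ?thesis using True
      by (intro exI[of _ "{}"] exI[of _ W]) (auto simp: disjoint_def)
  next
    case False
    then have big: "n \<le> card W" by simp
    define subW where "subW w = {y \<in> W. y \<in> desc w}" for w
    have Wne: "W \<noteq> {}" using big n by auto
    then obtain y0 where y0: "y0 \<in> W" by auto
    have "(p^^(lv y0 - lv v)) y0 = v" using desc_char[OF vV] y0 Wd by blast
    moreover have "(p^^(lv y0 - lv v)) y0 \<in> W" using chain_in[OF Wd vV cl y0] by simp
    ultimately have vW: "v \<in> W" by simp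
    define Cand where "Cand = {w \<in> W. n \<le> card (subW w)}"
    have "subW v = W" using Wd unfolding subW_def by auto
    then have vC: "v \<in> Cand" using vW big unfolding Cand_def by simp
    have finC: "finite Cand" using fin unfolding Cand_def by simp
    define m where "m = Max (lv ` Cand)"
    have "m \<in> lv ` Cand" unfolding m_def using finC vC by (intro Max_in) auto
    then obtain w where wC: "w \<in> Cand" and lw: "lv w = m" by auto
    have wmax: "lv w' \<le> lv w" if "w' \<in> Cand" for w'
      using that finC lw unfolding m_def by simp
    have wW: "w \<in> W" using wC Cand_def by simp
    have wV: "w \<in> V" using wW WV by blast
    have lvw: "lv v \<le> lv w" using desc_lv[OF vV] wW Wd by blast
    have finS: "finite (subW w')" for w' using fin unfolding subW_def by simp
    have deep: "lv y < lv w + n" if y: "y \<in> subW w" for y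
    proof (rule ccontr)
      assume "\<not> lv y < lv w + n"
      then have ge: "lv w + n \<le> lv y" by simp
      have yW: "y \<in> W" and yd: "y \<in> desc w" using y unfolding subW_def by auto
      have yV: "y \<in> V" using yW WV by blast
      define d where "d = lv y - lv w - 1"
      define z where "z = (p^^d) y"
      have zW: "z \<in> W" unfolding z_def using chain_in[OF Wd vV cl yW] d_def lvw by simp
      have lz: "lv z = lv w + 1" unfolding z_def d_def using lv_pw[OF yV] ge n by simp
      have sub: "(\<lambda>j. (p^^j) y) ` {0..d} \<subseteq> subW z"
      proof
        fix a assume "a \<in> (\<lambda>j. (p^^j) y) ` {0..d}"
        then obtain j where j: "j \<le> d" "a = (p^^j) y" by auto
        have aW: "a \<in> W" using chain_in[OF Wd vV cl yW, of j] j d_def lvw by simp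
        have "(p^^(d - j)) a = z" using j pw_add[of "d - j" j y] unfolding z_def by simp
        then have "a \<in> desc z" using aW WV unfolding desc_def by blast
        then show "a \<in> subW z" using aW unfolding subW_def by simp
      qed
      have "card ((\<lambda>j. (p^^j) y) ` {0..d}) = Suc d" using chain_card[OF yV] d_def by simp
      then have "Suc d \<le> card (subW z)" using card_mono[OF finS sub] by simp
      then have "n \<le> card (subW z)" using d_def ge n by simp
      then have "z \<in> Cand" using zW unfolding Cand_def by simp
      then show False using wmax lz by fastforce
    qed
    have "n \<le> card (subW w)" using wC Cand_def by simp
    then obtain P0 where P0: "P0 \<subseteq> subW w" "card P0 = n"
      "\<forall>a\<in>P0. \<forall>z\<in>subW w. lv a < lv z \<longrightarrow> z \<in> P0"
      using subset_top[OF finS[of w], of n lv] by blast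
    have P0W: "P0 \<subseteq> W" using P0(1) unfolding subW_def by auto
    define W' where "W' = W - P0"
    have finP0: "finite P0" using P0W fin finite_subset by blast
    have "card W' = card W - card P0" unfolding W'_def using P0W finP0 by (simp add: card_Diff_subset)
    then have cW': "card W' < card W" using P0(2) n big by simp
    have W'd: "W' \<subseteq> desc v" using Wd W'_def by auto
    have cl': "\<forall>y\<in>W'. y \<noteq> v \<longrightarrow> p y \<in> W'"
    proof (intro ballI impI)
      fix y assume yW': "y \<in> W'" and yv: "y \<noteq> v"
      have yW: "y \<in> W" "y \<notin> P0" using yW' W'_def by auto
      have pyW: "p y \<in> W" using cl yW yv by blast
      show "p y \<in> W'"
      proof (rule ccontr)
        assume "p y \<notin> W'"
        then have pyP: "p y \<in> P0" using pyW W'_def by auto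
        have yV: "y \<in> V" using yW WV by blast
        have yQ: "y \<notin> Q"
        proof
          assume "y \<in> Q" then have "p y = y" by (rule p_Q)
          then show False using pyP yW by simp
        qed
        have lt: "lv (p y) < lv y" using lv_p[OF yV yQ] by simp
        have "p y \<in> desc w" using pyP P0(1) unfolding subW_def by auto
        then have "y \<in> desc w" using desc_trans[OF desc_p[OF yV]] by blast
        then have "y \<in> subW w" using yW unfolding subW_def by simp
        then have "y \<in> P0" using P0(3) pyP lt by blast
        then show False using yW by simp
      qed
    qed
    obtain P' R where IH: "R \<subseteq> W'" "card R < n" "\<forall>y\<in>R. lv y < lv v + n"
      "\<forall>B\<in>P'. card B = n \<and> (\<exists>u. \<forall>y\<in>B. \<exists>i<n. (p^^i) y = u)" "disjoint P'" "\<Union>P' = W' - R"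
      using less.hyps[OF cW'] fin W'_def vV W'd cl' by (metis finite_Diff)
    have anc0: "\<exists>u. \<forall>y\<in>P0. \<exists>i<n. (p^^i) y = u"
    proof (intro exI[of _ w] ballI)
      fix y assume y: "y \<in> P0"
      then have ys: "y \<in> subW w" using P0(1) by blast
      then have "(p^^(lv y - lv w)) y = w" using desc_char[OF wV] unfolding subW_def by blast
      moreover have "lv y - lv w < n" using deep[OF ys] n by arith
      ultimately show "\<exists>i<n. (p^^i) y = w" by blast
    qed
    have dj0: "B \<inter> P0 = {}" if "B \<in> P'" for B
      using that IH(6) W'_def by blast
    show ?thesis
    proof (intro exI[of _ "insert P0 P'"] exI[of _ R] conjI)
      show "R \<subseteq> W" using IH(1) W'_def by auto
      show "card R < n" by (rule IH(2))
      show "\<forall>y\<in>R. lv y < lv v + n" by (rule IH(3))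
      show "\<forall>B\<in>insert P0 P'. card B = n \<and> (\<exists>u. \<forall>y\<in>B. \<exists>i<n. (p^^i) y = u)"
        using IH(4) P0(2) anc0 by blast
      show "disjoint (insert P0 P')"
        using IH(5) dj0 unfolding disjoint_def by blast
      show "\<Union>(insert P0 P') = W - R"
        using IH(1,6) P0W W'_def by blast
    qed
  qed
qed

end


lemma glue:
  fixes Reg :: "'l \<Rightarrow> 'a set" and Fam :: "'l \<Rightarrow> 'a set set"
  assumes regdj: "\<And>l l'. l \<in> L \<Longrightarrow> l' \<in> L \<Longrightarrow> l \<noteq> l' \<Longrightarrow> Reg l \<inter> Reg l' = {}"
    and famdj: "\<And>l. l \<in> L \<Longrightarrow> disjoint (Fam l)"
    and famU: "\<And>l. l \<in> L \<Longrightarrow> \<Union>(Fam l) = Reg l"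
  shows "disjoint (\<Union>l\<in>L. Fam l)" "\<Union>(\<Union>l\<in>L. Fam l) = (\<Union>l\<in>L. Reg l)"
proof -
  show "disjoint (\<Union>l\<in>L. Fam l)"
    unfolding disjoint_def
  proof (intro ballI impI)
    fix B B' assume B: "B \<in> (\<Union>l\<in>L. Fam l)" and B': "B' \<in> (\<Union>l\<in>L. Fam l)" and ne: "B \<noteq> B'"
    obtain l where l: "l \<in> L" "B \<in> Fam l" using B by auto
    obtain l' where l': "l' \<in> L" "B' \<in> Fam l'" using B' by auto
    show "B \<inter> B' = {}"
    proof (cases "l = l'")
      case True
      then show ?thesis using famdj[OF l(1)] l l' ne unfolding disjoint_def by blast
    next
      case False
      have "B \<subseteq> Reg l" using famU[OF l(1)] l(2) by blast
      moreover have "B' \<subseteq> Reg l'" using famU[OF l'(1)] l'(2) by blast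
      ultimately show ?thesis using regdj[OF l(1) l'(1) False] by blast
    qed
  qed
  show "\<Union>(\<Union>l\<in>L. Fam l) = (\<Union>l\<in>L. Reg l)" using famU by blast
qed

lemma finite_meeting:
  assumes dj: "disjoint P" and fz: "finite Z"
  shows "finite {B \<in> P. B \<inter> Z \<noteq> {}}"
proof -
  define f where "f B = (SOME z. z \<in> B \<inter> Z)" for B
  have fin: "f B \<in> B \<inter> Z" if "B \<inter> Z \<noteq> {}" for B
    unfolding f_def using that by (metis (mono_tags, lifting) all_not_in_conv someI_ex)
  have "inj_on f {B \<in> P. B \<inter> Z \<noteq> {}}"
  proof (rule inj_onI)
    fix B B' assume B: "B \<in> {B \<in> P. B \<inter> Z \<noteq> {}}" and B': "B' \<in> {B \<in> P. B \<inter> Z \<noteq> {}}" and e: "f B = f B'"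
    have "f B \<in> B" using fin B by auto
    moreover have "f B' \<in> B'" using fin B' by auto
    ultimately have "f B \<in> B" "f B \<in> B'" using e by auto
    then show "B = B'" using dj B B' unfolding disjoint_def by blast
  qed
  moreover have "f ` {B \<in> P. B \<inter> Z \<noteq> {}} \<subseteq> Z" using fin by auto
  ultimately show ?thesis using fz inj_on_finite by blast
qed

datatype 'a lab = LF 'a | LR 'a | LS

locale ptree_n = ptree +
  fixes n :: nat
  assumes n1: "1 \<le> n" and nQ: "card Q \<le> n" and Q_ne: "Q \<noteq> {}"
begin

definition fin_root :: "'a \<Rightarrow> bool" where
  "fin_root c \<longleftrightarrow> c \<in> V \<and> c \<notin> Q \<and> c \<notin> K \<and> (p c \<in> K \<or> p c \<in> Q)"

definition cspec :: "'a set set \<Rightarrow> 'a set \<Rightarrow> 'a \<Rightarrow> bool" where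
  "cspec P R c \<longleftrightarrow> R \<subseteq> desc c \<and> card R < n \<and> (\<forall>y\<in>R. lv y < lv c + n) \<and>
      (\<forall>B\<in>P. card B = n \<and> (\<exists>u. \<forall>y\<in>B. \<exists>i<n. (p^^i) y = u)) \<and> disjoint P \<and> \<Union>P = desc c - R"

definition CP :: "'a \<Rightarrow> 'a set set" where
  "CP c = fst (SOME PR. cspec (fst PR) (snd PR) c)"
definition CR :: "'a \<Rightarrow> 'a set" where
  "CR c = snd (SOME PR. cspec (fst PR) (snd PR) c)"

lemma KV: "x \<in> K \<Longrightarrow> x \<in> V" and KQ: "x \<in> K \<Longrightarrow> x \<notin> Q"
  unfolding K_def by auto

lemma fr_fin: "fin_root c \<Longrightarrow> finite (desc c)"
  unfolding fin_root_def K_def by auto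

lemma desc_closed: assumes "y \<in> desc c" "y \<noteq> c" shows "p y \<in> desc c"
proof -
  obtain k where k: "y \<in> V" "(p^^k) y = c" using assms(1) unfolding desc_def by auto
  have "k \<noteq> 0" using k assms(2) by (cases k) auto
  then obtain j where j: "k = Suc j" by (cases k) auto
  have "(p^^j) (p y) = c" using k j by (simp add: funpow_Suc_right del: funpow.simps)
  then show ?thesis using p_in[OF k(1)] unfolding desc_def by blast
qed

lemma CPR: assumes "fin_root c" shows "cspec (CP c) (CR c) c"
proof -
  have cV: "c \<in> V" using assms fin_root_def by auto
  have "\<exists>P R. cspec P R c"
    using carve[OF n1 fr_fin[OF assms] cV subset_refl] desc_closed unfolding cspec_def by blast
  then have "\<exists>PR. cspec (fst PR) (snd PR) c" by auto
  then have "cspec (fst (SOME PR. cspec (fst PR) (snd PR) c)) (snd (SOME PR. cspec (fst PR) (snd PR) c)) c"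
    by (rule someI_ex)
  then show ?thesis unfolding CP_def CR_def .
qed

lemma fr_noKQ: "fin_root c \<Longrightarrow> y \<in> desc c \<Longrightarrow> y \<notin> K \<and> y \<notin> Q"
  using desc_fin_noKQ unfolding fin_root_def by blast

lemma fr_disj_aux:
  assumes c: "fin_root c" and c': "fin_root c'" and y: "y \<in> desc c" "y \<in> desc c'" and le: "lv c \<le> lv c'"
  shows "c = c'"
proof (rule ccontr)
  assume ne: "c \<noteq> c'"
  have cV: "c \<in> V" and c'V: "c' \<in> V" using c c' fin_root_def by auto
  have c'd: "c' \<in> desc c" using anc_nested[OF cV c'V y le] .
  have "lv c \<noteq> lv c'" using anc_unique[OF cV c'V y] ne by blast
  then have "c' \<noteq> c" by blast
  then have "p c' \<in> desc c" using desc_closed[OF c'd] by blast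
  moreover have "p c' \<in> K \<or> p c' \<in> Q" using c' fin_root_def by auto
  ultimately show False using fr_noKQ[OF c] by blast
qed

lemma fr_disj: "fin_root c \<Longrightarrow> fin_root c' \<Longrightarrow> c \<noteq> c' \<Longrightarrow> desc c \<inter> desc c' = {}"
  using fr_disj_aux by (metis disjoint_iff nat_le_linear)

definition Stuff :: "'a \<Rightarrow> 'a set" where
  "Stuff a = \<Union>(CR ` {c. fin_root c \<and> p c = a})"

definition A :: "'a \<Rightarrow> 'a set" where
  "A u = insert u (Stuff u)"

definition AQ :: "'a set" where
  "AQ = (\<Union>q\<in>Q. Stuff q)"

definition pc :: "'a \<Rightarrow> 'a" where
  "pc u = (SOME c. c \<in> ch u \<and> c \<in> K)"

definition cs :: "'a" where
  "cs = (SOME c. c \<in> K \<and> p c \<in> Q)"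

definition ray :: "'a \<Rightarrow> nat \<Rightarrow> 'a" where
  "ray x i = (pc^^i) x"

definition St :: "'a set" where
  "St = {x \<in> K. x \<noteq> cs \<and> (p x \<in> Q \<or> pc (p x) \<noteq> x)}"

definition seqS :: "nat \<Rightarrow> 'a set" where
  "seqS i = (if i = 0 then Q else if i = 1 then A cs \<union> AQ else A (ray cs (i - 1)))"

lemma pc_K: assumes "u \<in> K" shows "pc u \<in> K" "p (pc u) = u"
proof -
  have "\<exists>c. c \<in> ch u \<and> c \<in> K" using K_child[OF assms] by blast
  then have "pc u \<in> ch u \<and> pc u \<in> K" unfolding pc_def by (rule someI_ex)
  then show "pc u \<in> K" "p (pc u) = u" unfolding ch_def by auto
qed

lemma cs_K: "cs \<in> K" "p cs \<in> Q"
proof -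
  have "cs \<in> K \<and> p cs \<in> Q" unfolding cs_def using Q_child by (rule someI_ex)
  then show "cs \<in> K" "p cs \<in> Q" by auto
qed

lemma ray_K: "x \<in> K \<Longrightarrow> ray x i \<in> K"
  unfolding ray_def by (induction i) (auto simp: pc_K)

lemma ray_Suc: "ray x (Suc i) = pc (ray x i)"
  unfolding ray_def by simp

lemma ray_p: "x \<in> K \<Longrightarrow> p (ray x (Suc i)) = ray x i"
  using ray_Suc pc_K(2)[OF ray_K] by simp

lemma lv_ray: "x \<in> K \<Longrightarrow> lv (ray x i) = lv x + i"
proof (induction i)
  case 0 then show ?case by (simp add: ray_def)
next
  case (Suc i)
  have r: "ray x (Suc i) \<in> K" using ray_K Suc.prems by blast
  have "Suc (lv (p (ray x (Suc i)))) = lv (ray x (Suc i))" using lv_p[OF KV[OF r] KQ[OF r]] .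
  then show ?case using ray_p[OF Suc.prems, of i] Suc by simp
qed

lemma ray_pw: "x \<in> K \<Longrightarrow> (p^^m) (ray x (i + m)) = ray x i"
proof (induction m)
  case 0 then show ?case by simp
next
  case (Suc m)
  have "(p^^(Suc m)) (ray x (i + Suc m)) = (p^^m) (p (ray x (Suc (i + m))))"
    by (simp add: funpow_Suc_right del: funpow.simps)
  also have "\<dots> = (p^^m) (ray x (i + m))" using ray_p[OF Suc.prems] by simp
  finally show ?case using Suc by simp
qed

lemma not_pc: assumes x: "x \<in> insert cs St" and u: "u \<in> K" shows "x \<noteq> pc u"
proof
  assume e: "x = pc u"
  then have px: "p x = u" using pc_K[OF u] by simp
  show False
  proof (cases "x = cs")
    case True then show ?thesis using cs_K px KQ[OF u] by simp
  next
    case False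
    then have "x \<in> St" using x by simp
    then have "p x \<in> Q \<or> pc (p x) \<noteq> x" unfolding St_def by simp
    then show False using px e KQ[OF u] by simp
  qed
qed

lemma startK: "x \<in> insert cs St \<Longrightarrow> x \<in> K"
  using cs_K unfolding St_def by auto

lemma ray_inj: assumes x: "x \<in> insert cs St" and x': "x' \<in> insert cs St"
  shows "ray x i = ray x' i' \<Longrightarrow> x = x' \<and> i = i'"
proof (induction i arbitrary: i')
  case 0
  then have h0: "x = ray x' i'" by (simp add: ray_def)
  show ?case
  proof (cases i')
    case 0 then show ?thesis using h0 by (simp add: ray_def)
  next
    case (Suc j)
    then have "x = pc (ray x' j)" using h0 ray_Suc by simp
    then show ?thesis using not_pc[OF x ray_K[OF startK[OF x']]] by blast
  qed
next
  case (Suc i)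
  show ?case
  proof (cases i')
    case 0
    then have "x' = pc (ray x i)" using Suc.prems ray_Suc by (simp add: ray_def)
    then show ?thesis using not_pc[OF x' ray_K[OF startK[OF x]]] by blast
  next
    case (Suc j)
    have "p (ray x (Suc i)) = p (ray x' (Suc j))" using Suc.prems \<open>i' = Suc j\<close> by simp
    then have "ray x i = ray x' j" using ray_p[OF startK[OF x]] ray_p[OF startK[OF x']] by simp
    then show ?thesis using Suc.IH \<open>i' = Suc j\<close> by simp
  qed
qed

lemma ray_cover: "y \<in> K \<Longrightarrow> \<exists>x\<in>insert cs St. \<exists>i. y = ray x i"
proof (induction "lv y" arbitrary: y rule: less_induct)
  case less
  show ?case
  proof (cases "y \<in> insert cs St")
    case True then show ?thesis by (intro bexI[of _ y] exI[of _ 0]) (auto simp: ray_def)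
  next
    case False
    then have "p y \<notin> Q" "pc (p y) = y" using less.prems unfolding St_def by auto
    then have pyK: "p y \<in> K" using K_up less.prems by blast
    have "lv (p y) < lv y" using lv_p[OF KV[OF less.prems] KQ[OF less.prems]] by simp
    then obtain x i where "x \<in> insert cs St" "p y = ray x i" using less.hyps pyK by blast
    then show ?thesis using ray_Suc \<open>pc (p y) = y\<close> by metis
  qed
qed

end


definition comb_spec :: "nat \<Rightarrow> (nat \<Rightarrow> 'a set) \<Rightarrow> 'a set set \<Rightarrow> bool" where
  "comb_spec n A P \<longleftrightarrow> (\<forall>B\<in>P. card B = n \<and> (\<exists>i. \<forall>y\<in>B. \<exists>k. i \<le> k \<and> k \<le> i + n \<and> y \<in> A k))
             \<and> disjoint P \<and> \<Union>P = (\<Union>i. A i) \<and> (card (A 0) \<le> n \<longrightarrow> (\<exists>B\<in>P. A 0 \<subseteq> B))"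

lemma combine': "n \<ge> 1 \<Longrightarrow> (\<And>i. finite (A i)) \<Longrightarrow> (\<And>i. A i \<noteq> {}) \<Longrightarrow> (\<And>i j. i \<noteq> j \<Longrightarrow> A i \<inter> A j = {})
  \<Longrightarrow> comb_spec n A (SOME P. comb_spec n A P)"
  using combine[of n A] unfolding comb_spec_def[symmetric] by (metis someI_ex)

context ptree_n begin

lemma Stuff_E: assumes "y \<in> Stuff a"
  obtains c where "fin_root c" "p c = a" "y \<in> CR c" "y \<in> desc c"
proof -
  obtain c where c: "fin_root c" "p c = a" "y \<in> CR c" using assms unfolding Stuff_def by auto
  then have "y \<in> desc c" using CPR[OF c(1)] unfolding cspec_def by blast
  then show ?thesis using c that by blast
qed

lemma Stuff_noKQ: "y \<in> Stuff a \<Longrightarrow> y \<notin> K \<and> y \<notin> Q"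
  by (metis Stuff_E fr_noKQ)

lemma Stuff_V: "Stuff a \<subseteq> V"
  using Stuff_E desc_V by blast

lemma Stuff_disj: assumes "a \<noteq> b" shows "Stuff a \<inter> Stuff b = {}"
proof (rule ccontr)
  assume "Stuff a \<inter> Stuff b \<noteq> {}"
  then obtain y where y: "y \<in> Stuff a" "y \<in> Stuff b" by auto
  obtain c where c: "fin_root c" "p c = a" "y \<in> desc c" using y(1) Stuff_E by metis
  obtain c' where c': "fin_root c'" "p c' = b" "y \<in> desc c'" using y(2) Stuff_E by metis
  have "c \<noteq> c'" using c c' assms by blast
  then show False using fr_disj[OF c(1) c'(1)] c c' by blast
qed

lemma Stuff_fin: assumes "a \<in> V" shows "finite (Stuff a)"
proof -
  have "{c. fin_root c \<and> p c = a} \<subseteq> ch a" unfolding ch_def fin_root_def by auto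
  then have f1: "finite {c. fin_root c \<and> p c = a}" using ch_finite[OF assms] finite_subset by blast
  have "finite (CR c)" if "fin_root c" for c
    using CPR[OF that] fr_fin[OF that] unfolding cspec_def by (metis finite_subset)
  then show ?thesis unfolding Stuff_def using f1 by auto
qed

lemma Rf_Stuff: assumes c: "fin_root c" shows "(desc c - CR c) \<inter> Stuff a = {}"
proof (rule ccontr)
  assume "(desc c - CR c) \<inter> Stuff a \<noteq> {}"
  then obtain y where y: "y \<in> desc c" "y \<notin> CR c" "y \<in> Stuff a" by auto
  obtain c' where c': "fin_root c'" "y \<in> CR c'" "y \<in> desc c'" using y(3) Stuff_E by metis
  have "c = c'" using fr_disj[OF c c'(1)] y(1) c'(3) by blast
  then show False using y(2) c'(2) by simp
qed

lemma A_fin: "u \<in> V \<Longrightarrow> finite (A u)"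
  unfolding A_def using Stuff_fin by simp

lemma A_V: "u \<in> V \<Longrightarrow> A u \<subseteq> V"
  unfolding A_def using Stuff_V by auto

lemma A_disj: assumes "u \<in> K" "u' \<in> K" "u \<noteq> u'" shows "A u \<inter> A u' = {}"
  unfolding A_def using Stuff_disj[OF assms(3)] Stuff_noKQ assms by blast

lemma A_Q: "u \<in> K \<Longrightarrow> A u \<inter> Q = {}"
  unfolding A_def using Stuff_noKQ KQ by blast

lemma A_AQ: assumes "u \<in> K" shows "A u \<inter> AQ = {}"
proof -
  have "Stuff u \<inter> Stuff q = {}" if "q \<in> Q" for q using Stuff_disj KQ[OF assms] that by metis
  moreover have "u \<notin> AQ" unfolding AQ_def using Stuff_noKQ assms by blast
  ultimately show ?thesis unfolding A_def AQ_def by blast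
qed

lemma Q_AQ: "Q \<inter> AQ = {}"
  unfolding AQ_def using Stuff_noKQ by blast

lemma AQ_fin: "finite AQ"
  unfolding AQ_def using Q_fin Stuff_fin Q_sub by blast

lemma AQ_V: "AQ \<subseteq> V" unfolding AQ_def using Stuff_V by blast

lemma Rf_A: assumes "fin_root c" "u \<in> K" shows "(desc c - CR c) \<inter> A u = {}"
  unfolding A_def using Rf_Stuff[OF assms(1)] fr_noKQ[OF assms(1)] assms(2) by blast

lemma Rf_Q: assumes "fin_root c" shows "(desc c - CR c) \<inter> Q = {}"
  using fr_noKQ[OF assms] by blast

lemma Rf_AQ: assumes "fin_root c" shows "(desc c - CR c) \<inter> AQ = {}"
  unfolding AQ_def using Rf_Stuff[OF assms] by blast

lemma A_anc: assumes u: "u \<in> K" and y: "y \<in> A u" shows "\<exists>j\<le>n. (p^^j) y = u"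
proof (cases "y = u")
  case True then show ?thesis by (intro exI[of _ 0]) simp
next
  case False
  then have "y \<in> Stuff u" using y A_def by simp
  then obtain c where c: "fin_root c" "p c = u" "y \<in> CR c" "y \<in> desc c" using Stuff_E by metis
  have cV: "c \<in> V" using c fin_root_def by simp
  have lt: "lv y < lv c + n" using CPR[OF c(1)] c(3) unfolding cspec_def by blast
  have e: "(p^^(lv y - lv c)) y = c" using desc_char[OF cV] c(4) by blast
  have "(p^^(Suc (lv y - lv c))) y = p ((p^^(lv y - lv c)) y)" by simp
  also have "\<dots> = u" using e c(2) by simp
  finally have "(p^^(Suc (lv y - lv c))) y = u" .
  moreover have "Suc (lv y - lv c) \<le> n" using lt desc_lv[OF cV c(4)] by simp
  ultimately show ?thesis by blast
qed

lemma fr_exists: "y \<in> V \<Longrightarrow> y \<notin> K \<Longrightarrow> y \<notin> Q \<Longrightarrow> \<exists>c. fin_root c \<and> y \<in> desc c"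
proof (induction "lv y" arbitrary: y rule: less_induct)
  case less
  show ?case
  proof (cases "p y \<in> K \<or> p y \<in> Q")
    case True
    then have "fin_root y" using less.prems unfolding fin_root_def by simp
    then show ?thesis using desc_self less.prems by blast
  next
    case False
    have "lv (p y) < lv y" using lv_p[OF less.prems(1,3)] by simp
    then obtain c where "fin_root c" "p y \<in> desc c"
      using less.hyps False p_in[OF less.prems(1)] by blast
    then show ?thesis using desc_trans[OF desc_p[OF less.prems(1)]] by blast
  qed
qed

lemma seqS_fin: "finite (seqS i)"
  unfolding seqS_def using Q_fin A_fin AQ_fin KV cs_K ray_K by auto

lemma seqS_ne: "seqS i \<noteq> {}"
  unfolding seqS_def A_def using Q_ne by auto

lemma ray_ne: "x \<in> insert cs St \<Longrightarrow> i \<noteq> j \<Longrightarrow> ray x i \<noteq> ray x j"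
  using ray_inj by blast

lemma seqS_disj: assumes "i \<noteq> j" shows "seqS i \<inter> seqS j = {}"
proof -
  have csS: "cs \<in> insert cs St" by simp
  have rK: "ray cs k \<in> K" for k using ray_K cs_K by blast
  have c1: "ray cs 0 = cs" by (simp add: ray_def)
  have gen: "seqS i \<inter> seqS j = {}" if "i < j" for i j
  proof (cases "i = 0")
    case True
    then show ?thesis using that A_Q[OF cs_K(1)] Q_AQ A_Q[OF rK] unfolding seqS_def by auto
  next
    case False
    show ?thesis
    proof (cases "i = 1")
      case True
      have "ray cs (j - 1) \<noteq> ray cs 0" using ray_ne[OF csS] that True by simp
      then have "A cs \<inter> A (ray cs (j - 1)) = {}" using A_disj[OF cs_K(1) rK] c1 by metis
      then show ?thesis using True that A_AQ[OF rK] unfolding seqS_def by auto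
    next
      case False
      have "ray cs (i - 1) \<noteq> ray cs (j - 1)" using ray_ne[OF csS] that \<open>i \<noteq> 0\<close> False by simp
      then show ?thesis using A_disj[OF rK rK] that \<open>i \<noteq> 0\<close> False unfolding seqS_def by auto
    qed
  qed
  show ?thesis using gen[of i j] gen[of j i] assms by (metis Int_commute nat_neq_iff)
qed

end


context ptree_n begin

definition Reg :: "'a lab \<Rightarrow> 'a set" where
  "Reg l = (case l of LF c \<Rightarrow> desc c - CR c | LR x \<Rightarrow> (\<Union>i. A (ray x i)) | LS \<Rightarrow> (\<Union>i. seqS i))"

definition CB :: "'a \<Rightarrow> 'a set set" where
  "CB x = (SOME P. comb_spec n (\<lambda>i. A (ray x i)) P)"

definition CBS :: "'a set set" where
  "CBS = (SOME P. comb_spec n seqS P)"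

definition Fam :: "'a lab \<Rightarrow> 'a set set" where
  "Fam l = (case l of LF c \<Rightarrow> CP c | LR x \<Rightarrow> CB x | LS \<Rightarrow> CBS)"

definition Lset :: "'a lab set" where
  "Lset = LF ` {c. fin_root c} \<union> LR ` St \<union> {LS}"

lemma St_K: "x \<in> St \<Longrightarrow> x \<in> K" unfolding St_def by simp

lemma CB_spec: assumes x: "x \<in> St" shows "comb_spec n (\<lambda>i. A (ray x i)) (CB x)"
  unfolding CB_def
proof (rule combine'[OF n1])
  have xK: "x \<in> K" using St_K x by blast
  show "finite (A (ray x i))" for i using A_fin KV ray_K[OF xK] by blast
  show "A (ray x i) \<noteq> {}" for i unfolding A_def by simp
  show "A (ray x i) \<inter> A (ray x j) = {}" if "i \<noteq> j" for i j
  proof -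
    have "x \<in> insert cs St" using x by blast
    then have "ray x i \<noteq> ray x j" using ray_ne that by blast
    then show ?thesis using A_disj[OF ray_K[OF xK] ray_K[OF xK]] by blast
  qed
qed

lemma CBS_spec: "comb_spec n seqS CBS"
  unfolding CBS_def by (rule combine'[OF n1 seqS_fin seqS_ne seqS_disj])

lemma ray_A_K: "x \<in> insert cs St \<Longrightarrow> ray x i \<in> K"
  using ray_K startK by blast

lemma dj_FF: "fin_root c \<Longrightarrow> fin_root c' \<Longrightarrow> c \<noteq> c' \<Longrightarrow> Reg (LF c) \<inter> Reg (LF c') = {}"
proof -
  assume a: "fin_root c" "fin_root c'" "c \<noteq> c'"
  have "desc c \<inter> desc c' = {}" using fr_disj[OF a] .
  then show ?thesis unfolding Reg_def by (simp only: lab.case) blast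
qed

lemma dj_FR: assumes "fin_root c" "x \<in> St" shows "Reg (LF c) \<inter> Reg (LR x) = {}"
proof -
  have "(desc c - CR c) \<inter> A (ray x i) = {}" for i using Rf_A[OF assms(1) ray_K[OF St_K[OF assms(2)]]] .
  then show ?thesis unfolding Reg_def by (simp only: lab.case) blast
qed

lemma dj_FS: assumes c: "fin_root c" shows "Reg (LF c) \<inter> Reg LS = {}"
proof -
  have "(desc c - CR c) \<inter> seqS i = {}" for i
  proof -
    consider "i = 0" | "i = 1" | "i \<noteq> 0" "i \<noteq> 1" by blast
    then show ?thesis
    proof cases
      case 1 then show ?thesis using Rf_Q[OF c] unfolding seqS_def by simp
    next
      case 2
      have "(desc c - CR c) \<inter> A cs = {}" using Rf_A[OF c cs_K(1)] .
      moreover have "seqS i = A cs \<union> AQ" using 2 unfolding seqS_def by simp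
      ultimately show ?thesis using Rf_AQ[OF c] by blast
    next
      case 3
      have "(desc c - CR c) \<inter> A (ray cs (i - 1)) = {}" using Rf_A[OF c ray_K[OF cs_K(1)]] .
      then show ?thesis using 3 unfolding seqS_def by simp
    qed
  qed
  then show ?thesis unfolding Reg_def by (simp only: lab.case) blast
qed

lemma dj_RR: assumes x: "x \<in> St" and x': "x' \<in> St" and ne: "x \<noteq> x'" shows "Reg (LR x) \<inter> Reg (LR x') = {}"
proof -
  have "A (ray x i) \<inter> A (ray x' j) = {}" for i j
  proof -
    have xx: "x \<in> insert cs St" "x' \<in> insert cs St" using x x' by blast+
    have "ray x i \<noteq> ray x' j" using ray_inj[OF xx, of i j] ne by blast
    then show ?thesis using A_disj[OF ray_A_K[OF xx(1)] ray_A_K[OF xx(2)]] by blast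
  qed
  then show ?thesis unfolding Reg_def by (simp only: lab.case) blast
qed

lemma dj_RS: assumes x: "x \<in> St" shows "Reg (LR x) \<inter> Reg LS = {}"
proof -
  have xs: "x \<in> insert cs St" using x by simp
  have xcs: "x \<noteq> cs" using x St_def by simp
  have csS: "cs \<in> insert cs St" by simp
  have "A (ray x i) \<inter> seqS k = {}" for i k
  proof -
    have rK: "ray x i \<in> K" using ray_A_K[OF xs] .
    have ne: "ray x i \<noteq> ray cs m" for m using ray_inj[OF xs csS, of i m] xcs by blast
    have c1: "ray cs 0 = cs" by (simp add: ray_def)
    consider "k = 0" | "k = 1" | "k \<noteq> 0" "k \<noteq> 1" by blast
    then show ?thesis
    proof cases
      case 1 then show ?thesis using A_Q[OF rK] unfolding seqS_def by simp
    next
      case 2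
      have "ray x i \<noteq> cs" using ne[of 0] c1 by metis
      then have "A (ray x i) \<inter> A cs = {}" using A_disj[OF rK cs_K(1)] by blast
      moreover have "seqS k = A cs \<union> AQ" using 2 unfolding seqS_def by simp
      ultimately show ?thesis using A_AQ[OF rK] by blast
    next
      case 3
      have "A (ray x i) \<inter> A (ray cs (k - 1)) = {}" using A_disj[OF rK ray_A_K[OF csS]] ne by blast
      then show ?thesis using 3 unfolding seqS_def by simp
    qed
  qed
  then show ?thesis unfolding Reg_def by (simp only: lab.case) blast
qed

lemma reg_dj1: assumes "l \<in> Lset" "l' \<in> Lset" "l \<noteq> l'" "\<not> (l' = LS)" "\<not> (\<exists>c. l = LR c \<and> (\<exists>c'. l' = LF c'))"
  shows "Reg l \<inter> Reg l' = {}"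
proof -
  have F: "l \<in> Lset \<Longrightarrow> (\<exists>c. fin_root c \<and> l = LF c) \<or> (\<exists>x. x \<in> St \<and> l = LR x) \<or> l = LS" for l
    unfolding Lset_def by auto
  show ?thesis using F[OF assms(1)]
  proof (elim disjE exE conjE)
    fix c assume c: "fin_root c" "l = LF c"
    show ?thesis using F[OF assms(2)]
    proof (elim disjE exE conjE)
      fix c' assume c': "fin_root c'" "l' = LF c'"
      then show ?thesis using dj_FF[OF c(1) c'(1)] c assms(3) by blast
    next
      fix x assume x: "x \<in> St" "l' = LR x"
      then show ?thesis using dj_FR[OF c(1) x(1)] c by simp
    next
      assume "l' = LS" then show ?thesis using assms(4) by simp
    qed
  next
    fix x assume x: "x \<in> St" "l = LR x"
    show ?thesis using F[OF assms(2)]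
    proof (elim disjE exE conjE)
      fix c' assume c': "fin_root c'" "l' = LF c'"
      then show ?thesis using assms(5) x by blast
    next
      fix x' assume x': "x' \<in> St" "l' = LR x'"
      then show ?thesis using dj_RR[OF x(1) x'(1)] x assms(3) by blast
    next
      assume "l' = LS" then show ?thesis using assms(4) by simp
    qed
  next
    assume "l = LS"
    show ?thesis using F[OF assms(2)]
    proof (elim disjE exE conjE)
      fix c' assume c': "fin_root c'" "l' = LF c'"
      then show ?thesis using dj_FS[OF c'(1)] \<open>l = LS\<close> by blast
    next
      fix x' assume x': "x' \<in> St" "l' = LR x'"
      then show ?thesis using dj_RS[OF x'(1)] \<open>l = LS\<close> by blast
    next
      assume "l' = LS" then show ?thesis using assms(3) \<open>l = LS\<close> by simp
    qed
  qed
qed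

lemma reg_dj: assumes "l \<in> Lset" "l' \<in> Lset" "l \<noteq> l'" shows "Reg l \<inter> Reg l' = {}"
proof (cases "l' = LS \<or> (\<exists>c. l = LR c \<and> (\<exists>c'. l' = LF c'))")
  case True
  have "Reg l' \<inter> Reg l = {}"
  proof (rule reg_dj1[OF assms(2,1)])
    show "l' \<noteq> l" using assms(3) by blast
    show "l \<noteq> LS" using True assms(3) by auto
    show "\<not> (\<exists>c. l' = LR c \<and> (\<exists>c'. l = LF c'))" using True by auto
  qed
  then show ?thesis by blast
next
  case False
  then show ?thesis using reg_dj1[OF assms] by blast
qed

lemma fam_ok: assumes "l \<in> Lset" shows "disjoint (Fam l) \<and> \<Union>(Fam l) = Reg l \<and> (\<forall>B\<in>Fam l. card B = n)"
proof -
  have "(\<exists>c. fin_root c \<and> l = LF c) \<or> (\<exists>x. x \<in> St \<and> l = LR x) \<or> l = LS"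
    using assms unfolding Lset_def by auto
  then show ?thesis
  proof (elim disjE exE conjE)
    fix c assume c: "fin_root c" "l = LF c"
    then show ?thesis using CPR[OF c(1)] unfolding cspec_def Fam_def Reg_def by simp
  next
    fix x assume x: "x \<in> St" "l = LR x"
    then show ?thesis using CB_spec[OF x(1)] unfolding comb_spec_def Fam_def Reg_def by simp
  next
    assume "l = LS"
    then show ?thesis using CBS_spec unfolding comb_spec_def Fam_def Reg_def by simp
  qed
qed

lemma A_covered: assumes u: "u \<in> K" shows "A u \<subseteq> (\<Union>l\<in>Lset. Reg l)"
proof -
  obtain x i where x: "x \<in> insert cs St" "u = ray x i" using ray_cover[OF u] by blast
  show ?thesis
  proof (cases "x = cs")
    case True
    have "A u \<subseteq> seqS (Suc i)"
    proof (cases i)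
      case 0 then show ?thesis using x True unfolding seqS_def by (simp add: ray_def)
    next
      case (Suc j) then show ?thesis using x True unfolding seqS_def by simp
    qed
    then have "A u \<subseteq> Reg LS" unfolding Reg_def by auto
    then show ?thesis unfolding Lset_def by auto
  next
    case False
    then have "x \<in> St" using x by simp
    moreover have "A u \<subseteq> Reg (LR x)" unfolding Reg_def using x by auto
    ultimately show ?thesis unfolding Lset_def by auto
  qed
qed

lemma reg_union: "(\<Union>l\<in>Lset. Reg l) = V"
proof
  show "(\<Union>l\<in>Lset. Reg l) \<subseteq> V"
  proof
    fix y assume "y \<in> (\<Union>l\<in>Lset. Reg l)"
    then obtain l where l: "l \<in> Lset" "y \<in> Reg l" by auto
    have rs: "seqS i \<subseteq> V" for i
      unfolding seqS_def using Q_sub AQ_V A_V KV cs_K(1) ray_A_K[of cs] by auto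
    have "(\<exists>c. fin_root c \<and> l = LF c) \<or> (\<exists>x. x \<in> St \<and> l = LR x) \<or> l = LS"
      using l unfolding Lset_def by auto
    then show "y \<in> V"
    proof (elim disjE exE conjE)
      fix c assume "fin_root c" "l = LF c"
      then show ?thesis using l desc_V unfolding Reg_def by auto
    next
      fix x assume x: "x \<in> St" "l = LR x"
      have "A (ray x i) \<subseteq> V" for i using A_V KV ray_A_K[of x] x(1) by blast
      then show ?thesis using l x unfolding Reg_def by auto
    next
      assume "l = LS" then show ?thesis using l rs unfolding Reg_def by auto
    qed
  qed
next
  show "V \<subseteq> (\<Union>l\<in>Lset. Reg l)"
  proof
    fix y assume y: "y \<in> V"
    consider "y \<in> Q" | "y \<in> K" | "y \<notin> Q" "y \<notin> K" by blast
    then show "y \<in> (\<Union>l\<in>Lset. Reg l)"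
    proof cases
      case 1
      then have "y \<in> Reg LS" unfolding Reg_def seqS_def by (auto intro: exI[of _ 0])
      then show ?thesis unfolding Lset_def by auto
    next
      case 2
      then show ?thesis using A_covered[OF 2] unfolding A_def by auto
    next
      case 3
      obtain c where c: "fin_root c" "y \<in> desc c" using fr_exists[OF y 3(2) 3(1)] by blast
      show ?thesis
      proof (cases "y \<in> CR c")
        case False
        then have "y \<in> Reg (LF c)" using c unfolding Reg_def by simp
        then show ?thesis using c unfolding Lset_def by auto
      next
        case True
        then have yS: "y \<in> Stuff (p c)" unfolding Stuff_def using c by auto
        have "p c \<in> K \<or> p c \<in> Q" using c fin_root_def by simp
        then show ?thesis
        proof
          assume "p c \<in> K"
          then show ?thesis using A_covered yS unfolding A_def by blast
        next
          assume "p c \<in> Q"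
          then have "y \<in> AQ" using yS unfolding AQ_def by blast
          then have "y \<in> seqS 1" unfolding seqS_def by simp
          then have "y \<in> Reg LS" unfolding Reg_def by (simp only: lab.case) blast
          then show ?thesis unfolding Lset_def by auto
        qed
      qed
    qed
  qed
qed

lemma anc_ray: assumes x: "x \<in> K" and y: "y \<in> A (ray x k)" and k: "i0 \<le> k" "k \<le> i0 + n"
  shows "\<exists>i\<le>2*n. (p^^i) y = ray x i0"
proof -
  obtain j where j: "j \<le> n" "(p^^j) y = ray x k" using A_anc[OF ray_K[OF x] y] by blast
  have "(p^^(k - i0)) (ray x (i0 + (k - i0))) = ray x i0" using ray_pw[OF x] by blast
  then have "(p^^(k - i0)) (ray x k) = ray x i0" using k by simp
  moreover have "(p^^((k - i0) + j)) y = (p^^(k - i0)) ((p^^j) y)" by (rule pw_add)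
  ultimately have "(p^^((k - i0) + j)) y = ray x i0" using j(2) by simp
  moreover have "(k - i0) + j \<le> 2*n" using j k by simp
  ultimately show ?thesis by blast
qed

definition Exc :: "'a set set" where
  "Exc = {B \<in> CBS. B \<inter> (seqS 0 \<union> seqS 1) \<noteq> {}}"

lemma Exc_fin: "finite Exc"
  unfolding Exc_def using finite_meeting[of CBS "seqS 0 \<union> seqS 1"] CBS_spec seqS_fin
  unfolding comb_spec_def by blast

lemma anchor: assumes l: "l \<in> Lset" and B: "B \<in> Fam l" and nE: "B \<notin> Exc"
  shows "\<exists>u. \<forall>y\<in>B. \<exists>i\<le>2*n. (p^^i) y = u"
proof -
  have "(\<exists>c. fin_root c \<and> l = LF c) \<or> (\<exists>x. x \<in> St \<and> l = LR x) \<or> l = LS"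
    using l unfolding Lset_def by auto
  then show ?thesis
  proof (elim disjE exE conjE)
    fix c assume c: "fin_root c" "l = LF c"
    have BC: "B \<in> CP c" using B c(2) unfolding Fam_def by simp
    have "\<exists>u. \<forall>y\<in>B. \<exists>i<n. (p^^i) y = u" using CPR[OF c(1)] BC unfolding cspec_def by blast
    then obtain u where u: "\<forall>y\<in>B. \<exists>i<n. (p^^i) y = u" by blast
    have "\<forall>y\<in>B. \<exists>i\<le>2*n. (p^^i) y = u"
    proof
      fix y assume "y \<in> B"
      then obtain i where "i < n" "(p^^i) y = u" using u by blast
      moreover have "i \<le> 2*n" using \<open>i < n\<close> by simp
      ultimately show "\<exists>i\<le>2*n. (p^^i) y = u" by blast
    qed
    then show ?thesis by blast
  next
    fix x assume x: "x \<in> St" "l = LR x"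
    have BC: "B \<in> CB x" using B x(2) unfolding Fam_def by simp
    obtain i0 where i0: "\<forall>y\<in>B. \<exists>k. i0 \<le> k \<and> k \<le> i0 + n \<and> y \<in> A (ray x k)"
      using CB_spec[OF x(1)] BC unfolding comb_spec_def by blast
    have "\<forall>y\<in>B. \<exists>i\<le>2*n. (p^^i) y = ray x i0"
    proof
      fix y assume "y \<in> B"
      then obtain k where "i0 \<le> k" "k \<le> i0 + n" "y \<in> A (ray x k)" using i0 by blast
      then show "\<exists>i\<le>2*n. (p^^i) y = ray x i0" using anc_ray[OF St_K[OF x(1)]] by blast
    qed
    then show ?thesis by blast
  next
    assume ls: "l = LS"
    then have BS: "B \<in> CBS" using B Fam_def by simp
    then obtain i0 where i0: "\<forall>y\<in>B. \<exists>k. i0 \<le> k \<and> k \<le> i0 + n \<and> y \<in> seqS k"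
      using CBS_spec unfolding comb_spec_def by blast
    have dis: "B \<inter> (seqS 0 \<union> seqS 1) = {}" using nE BS Exc_def by blast
    define i1 where "i1 = max i0 2 - 1"
    have "\<forall>y\<in>B. \<exists>i\<le>2*n. (p^^i) y = ray cs i1"
    proof
      fix y assume y: "y \<in> B"
      obtain k where k: "i0 \<le> k" "k \<le> i0 + n" "y \<in> seqS k" using i0 y by blast
      have yn: "y \<notin> seqS 0" "y \<notin> seqS 1" using dis y by blast+
      have "k \<noteq> 0" using yn(1) k(3) by (metis)
      moreover have "k \<noteq> 1" using yn(2) k(3) by (metis)
      moreover have "seqS k = A (ray cs (k - 1))" if "k \<noteq> 0" "k \<noteq> 1" using that unfolding seqS_def by simp
      ultimately have "y \<in> A (ray cs (k - 1))" using k(3) by simp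
      moreover have "i1 \<le> k - 1" "k - 1 \<le> i1 + n" using k \<open>k \<noteq> 0\<close> \<open>k \<noteq> 1\<close> unfolding i1_def by auto
      ultimately show "\<exists>i\<le>2*n. (p^^i) y = ray cs i1" using anc_ray[OF cs_K(1)] by blast
    qed
    then show ?thesis by blast
  qed
qed

theorem main_partition:
  "\<exists>P. (\<forall>B\<in>P. card B = n) \<and> disjoint P \<and> \<Union>P = V \<and> (\<exists>B\<in>P. Q \<subseteq> B) \<and>
       finite {B\<in>P. \<not>(\<exists>u. \<forall>y\<in>B. \<exists>i\<le>2*n. (p^^i) y = u)}"
proof (intro exI[of _ "\<Union>l\<in>Lset. Fam l"] conjI)
  show "\<forall>B\<in>(\<Union>l\<in>Lset. Fam l). card B = n" using fam_ok by blast
  show "disjoint (\<Union>l\<in>Lset. Fam l)" using glue(1)[of Lset Reg Fam] reg_dj fam_ok by blast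
  show "\<Union>(\<Union>l\<in>Lset. Fam l) = V" using glue(2)[of Lset Reg Fam] reg_dj fam_ok reg_union by simp
  have "card (seqS 0) \<le> n" using nQ unfolding seqS_def by simp
  then obtain B where "B \<in> CBS" "seqS 0 \<subseteq> B" using CBS_spec unfolding comb_spec_def by blast
  moreover have "LS \<in> Lset" unfolding Lset_def by simp
  moreover have "seqS 0 = Q" unfolding seqS_def by simp
  moreover have "Fam LS = CBS" unfolding Fam_def by simp
  ultimately show "\<exists>B\<in>(\<Union>l\<in>Lset. Fam l). Q \<subseteq> B" by blast
  have "{B\<in>(\<Union>l\<in>Lset. Fam l). \<not>(\<exists>u. \<forall>y\<in>B. \<exists>i\<le>2*n. (p^^i) y = u)} \<subseteq> Exc"
    using anchor by blast
  then show "finite {B\<in>(\<Union>l\<in>Lset. Fam l). \<not>(\<exists>u. \<forall>y\<in>B. \<exists>i\<le>2*n. (p^^i) y = u)}"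
    using Exc_fin finite_subset by blast
qed

end


context group begin

lemma card_lcos: assumes "M \<subseteq> carrier G" "a \<in> carrier G" shows "card (a <# M) = card M"
proof -
  have "a <# M = (\<lambda>y. a \<otimes> y) ` M" unfolding l_coset_def by auto
  moreover have "inj_on (\<lambda>y. a \<otimes> y) M"
  proof (rule inj_onI)
    fix x y assume "x \<in> M" "y \<in> M" "a \<otimes> x = a \<otimes> y"
    then show "x = y" using assms l_cancel by blast
  qed
  ultimately show ?thesis by (simp add: card_image)
qed

lemma tiling_from_partition:
  assumes Hs: "subgroup H G" and n: "n \<ge> 1"
    and Pc: "\<forall>B\<in>P. card B = n" and Pd: "disjoint P" and PU: "\<Union>P = H"
    and ctr: "\<forall>B\<in>P. ctr B \<in> B"
    and shf: "finite ((\<lambda>B. inv (ctr B) <# B) ` P)"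
    and B0: "B0 \<in> P" "F \<subseteq> B0" "ctr B0 = \<one>"
  shows "\<exists>Ts. polytile G Ts \<and> fair Ts \<and> F \<subseteq> Ts!0 \<and> card (Ts!0) = n"
proof -
  have HG: "H \<subseteq> carrier G" using Hs subgroup.subset by blast
  have BH: "B \<subseteq> H" if "B \<in> P" for B using that PU by blast
  have BG: "B \<subseteq> carrier G" if "B \<in> P" for B using BH[OF that] HG by blast
  have cG: "ctr B \<in> carrier G" if "B \<in> P" for B using ctr that BG by blast
  have Bfin: "finite B" if "B \<in> P" for B using Pc that n by (metis card_ge_0_finite le_numeral_extra(2) less_le_trans zero_less_one)
  define shp where "shp B = inv (ctr B) <# B" for B
  have shpG: "shp B \<subseteq> carrier G" if "B \<in> P" for B
    unfolding shp_def using l_coset_subset_G[OF BG[OF that]] cG[OF that] by simp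
  have shp1: "\<one> \<in> shp B" if "B \<in> P" for B
    unfolding shp_def l_coset_def using ctr that cG[OF that] by force
  have shpc: "card (shp B) = n" if "B \<in> P" for B
    unfolding shp_def using card_lcos[OF BG[OF that]] cG[OF that] Pc that by simp
  have shpfin: "finite (shp B)" if "B \<in> P" for B
    using shpc[OF that] n by (metis card_ge_0_finite le_numeral_extra(2) less_le_trans zero_less_one)
  have shp_trans: "(g \<otimes> ctr B) <# shp B = g <# B" if "B \<in> P" "g \<in> carrier G" for B g
  proof -
    have "(g \<otimes> ctr B) <# shp B = ((g \<otimes> ctr B) \<otimes> inv (ctr B)) <# B"
      unfolding shp_def using lcos_m_assoc[OF BG[OF that(1)]] cG[OF that(1)] that(2) by simp
    also have "(g \<otimes> ctr B) \<otimes> inv (ctr B) = g" using cG[OF that(1)] that(2) by (simp add: m_assoc)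
    finally show ?thesis .
  qed
  have shp0: "shp B0 = B0" unfolding shp_def using B0 lcos_mult_one[OF BG[OF B0(1)]] by simp
  define Sh where "Sh = shp ` P"
  have finSh: "finite Sh" using shf unfolding Sh_def shp_def by simp
  obtain l where l: "set l = Sh - {B0}" "distinct l" using finite_distinct_list[of "Sh - {B0}"] finSh by auto
  define Ts where "Ts = B0 # l"
  have setTs: "set Ts = Sh" using l shp0 B0(1) unfolding Ts_def Sh_def by force
  have distTs: "distinct Ts" using l unfolding Ts_def by simp
  define rep where "rep x = (SOME g. g \<in> x <# H)" for x
  have selfc: "x \<in> x <# H" if "x \<in> carrier G" for x
    unfolding l_coset_def using that subgroup.one_closed[OF Hs] by force
  have rep_in: "rep x \<in> x <# H" if "x \<in> carrier G" for x
    unfolding rep_def using selfc[OF that] by (metis someI_ex)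
  have repG: "rep x \<in> carrier G" if "x \<in> carrier G" for x
    using l_coset_carrier[OF rep_in[OF that] that Hs] .
  have rep_cos: "rep x <# H = x <# H" if "x \<in> carrier G" for x
    using l_repr_independence[OF rep_in[OF that] that Hs] by simp
  define R where "R = rep ` carrier G"
  have RG: "R \<subseteq> carrier G" using repG R_def by auto
  have decomp: "\<exists>g\<in>R. \<exists>h\<in>H. x = g \<otimes> h" if "x \<in> carrier G" for x
  proof -
    have "x \<in> rep x <# H" using rep_cos[OF that] selfc[OF that] by simp
    then show ?thesis unfolding l_coset_def R_def using that by blast
  qed
  have uniq: "g = g'" if as: "g \<in> R" "g' \<in> R" "h \<in> H" "h' \<in> H" "g \<otimes> h = g' \<otimes> h'" for g g' h h'
  proof -
    obtain x where x: "x \<in> carrier G" "g = rep x" using as(1) R_def by auto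
    obtain x' where x': "x' \<in> carrier G" "g' = rep x'" using as(2) R_def by auto
    have "g \<otimes> h \<in> x <# H" using rep_cos[OF x(1)] x(2) as(3) unfolding l_coset_def by blast
    then have e1: "x <# H = (g \<otimes> h) <# H" using l_repr_independence[OF _ x(1) Hs] by blast
    have "g' \<otimes> h' \<in> x' <# H" using rep_cos[OF x'(1)] x'(2) as(4) unfolding l_coset_def by blast
    then have e2: "x' <# H = (g' \<otimes> h') <# H" using l_repr_independence[OF _ x'(1) Hs] by blast
    have "x <# H = x' <# H" using e1 e2 as(5) by simp
    then show ?thesis unfolding x(2) x'(2) rep_def by simp
  qed
  define \<Delta> where "\<Delta> i = {g \<otimes> ctr B | g B. g \<in> R \<and> B \<in> P \<and> shp B = Ts!i}" for i
  have Rne: "R \<noteq> {}" unfolding R_def by auto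
  show ?thesis
  proof (intro exI[of _ Ts] conjI)
    show "F \<subseteq> Ts ! 0" using B0 unfolding Ts_def by simp
    show "card (Ts ! 0) = n" using Pc B0 unfolding Ts_def by simp
    show "fair Ts" unfolding fair_def using setTs shpc unfolding Sh_def by auto
    show "polytile G Ts"
      unfolding polytile_def
    proof (intro conjI)
      show "Ts \<noteq> []" unfolding Ts_def by simp
      show "\<forall>T\<in>set Ts. finite T \<and> T \<subseteq> carrier G \<and> \<one> \<in> T"
        using setTs shpfin shpG shp1 unfolding Sh_def by auto
      show "\<exists>\<Delta>. (\<forall>i<length Ts. \<Delta> i \<noteq> {} \<and> \<Delta> i \<subseteq> carrier G) \<and>
          (\<Union>i<length Ts. \<Union>\<delta>\<in>\<Delta> i. l_coset G \<delta> (Ts!i)) = carrier G \<and>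
          (\<forall>i<length Ts. \<forall>j<length Ts. \<forall>\<delta>\<in>\<Delta> i. \<forall>\<delta>'\<in>\<Delta> j. (i, \<delta>) \<noteq> (j, \<delta>') \<longrightarrow>
              l_coset G \<delta> (Ts!i) \<inter> l_coset G \<delta>' (Ts!j) = {})"
      proof (intro exI[of _ \<Delta>] conjI allI impI ballI)
        fix i assume i: "i < length Ts"
        then have "Ts ! i \<in> Sh" using setTs nth_mem by blast
        then obtain B where B: "B \<in> P" "shp B = Ts ! i" unfolding Sh_def by auto
        obtain g where "g \<in> R" using Rne by auto
        then show "\<Delta> i \<noteq> {}" unfolding \<Delta>_def using B by blast
        show "\<Delta> i \<subseteq> carrier G" unfolding \<Delta>_def using RG cG by blast
      next
        show "(\<Union>i<length Ts. \<Union>\<delta>\<in>\<Delta> i. l_coset G \<delta> (Ts!i)) = carrier G"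
        proof
          show "(\<Union>i<length Ts. \<Union>\<delta>\<in>\<Delta> i. l_coset G \<delta> (Ts!i)) \<subseteq> carrier G"
          proof (intro UN_least)
            fix i \<delta> assume i: "i \<in> {..<length Ts}" and d: "\<delta> \<in> \<Delta> i"
            obtain g B where gB: "\<delta> = g \<otimes> ctr B" "g \<in> R" "B \<in> P" "shp B = Ts!i" using d \<Delta>_def by auto
            have "l_coset G \<delta> (Ts!i) = g <# B" using shp_trans[OF gB(3)] gB RG by auto
            then show "l_coset G \<delta> (Ts!i) \<subseteq> carrier G" using l_coset_subset_G[OF BG[OF gB(3)]] gB RG by auto
          qed
        next
          show "carrier G \<subseteq> (\<Union>i<length Ts. \<Union>\<delta>\<in>\<Delta> i. l_coset G \<delta> (Ts!i))"
          proof
            fix x assume x: "x \<in> carrier G"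
            obtain g h where gh: "g \<in> R" "h \<in> H" "x = g \<otimes> h" using decomp[OF x] by blast
            obtain B where B: "B \<in> P" "h \<in> B" using gh(2) PU by blast
            have "shp B \<in> set Ts" using setTs B(1) unfolding Sh_def by auto
            then obtain i where i: "i < length Ts" "Ts!i = shp B" by (metis in_set_conv_nth)
            have d: "g \<otimes> ctr B \<in> \<Delta> i" unfolding \<Delta>_def using gh B i by auto
            have "x \<in> g <# B" unfolding l_coset_def using gh B by blast
            then have "x \<in> l_coset G (g \<otimes> ctr B) (Ts!i)" using shp_trans[OF B(1)] gh RG i by auto
            then show "x \<in> (\<Union>i<length Ts. \<Union>\<delta>\<in>\<Delta> i. l_coset G \<delta> (Ts!i))" using i d by blast
          qed
        qed
      next
        fix i j \<delta> \<delta>' assume i: "i < length Ts" and j: "j < length Ts" and d: "\<delta> \<in> \<Delta> i" and d': "\<delta>' \<in> \<Delta> j"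
          and ne: "(i, \<delta>) \<noteq> (j, \<delta>')"
        obtain g B where gB: "\<delta> = g \<otimes> ctr B" "g \<in> R" "B \<in> P" "shp B = Ts!i" using d \<Delta>_def by auto
        obtain g' B' where gB': "\<delta>' = g' \<otimes> ctr B'" "g' \<in> R" "B' \<in> P" "shp B' = Ts!j" using d' \<Delta>_def by auto
        have c1: "l_coset G \<delta> (Ts!i) = g <# B" using shp_trans[OF gB(3)] gB RG by auto
        have c2: "l_coset G \<delta>' (Ts!j) = g' <# B'" using shp_trans[OF gB'(3)] gB' RG by auto
        show "l_coset G \<delta> (Ts!i) \<inter> l_coset G \<delta>' (Ts!j) = {}"
        proof (rule ccontr)
          assume "l_coset G \<delta> (Ts!i) \<inter> l_coset G \<delta>' (Ts!j) \<noteq> {}"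
          then obtain z where "z \<in> g <# B" "z \<in> g' <# B'" using c1 c2 by auto
          then obtain b b' where bb: "b \<in> B" "b' \<in> B'" "z = g \<otimes> b" "z = g' \<otimes> b'" unfolding l_coset_def by auto
          have bH: "b \<in> H" "b' \<in> H" using bb BH gB(3) gB'(3) by auto
          have gg: "g = g'" using uniq[OF gB(2) gB'(2) bH] bb by simp
          have "b = b'" using bb gg RG gB(2) bH HG by (metis l_cancel subsetD)
          then have "B = B'" using Pd bb gB(3) gB'(3) unfolding disjoint_def by blast
          then have "Ts!i = Ts!j" using gB gB' by simp
          then have "i = j" using distTs i j nth_eq_iff_index_eq by blast
          moreover have "\<delta> = \<delta>'" using gB gB' gg \<open>B = B'\<close> by simp
          ultimately show False using ne by simp
        qed
      qed
    qed
  qed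
qed

end


primrec wball :: "('a, 'b) monoid_scheme \<Rightarrow> 'a set \<Rightarrow> nat \<Rightarrow> 'a set" where
  "wball G S 0 = {\<one>\<^bsub>G\<^esub>}"
| "wball G S (Suc k) = {a \<otimes>\<^bsub>G\<^esub> s | a s. a \<in> wball G S k \<and> s \<in> S}"

context group begin

lemma cancel_l: "a \<in> carrier G \<Longrightarrow> b \<in> carrier G \<Longrightarrow> inv a \<otimes> (a \<otimes> b) = b"
  by (simp add: m_assoc[symmetric])

lemma cancel_l2: "a \<in> carrier G \<Longrightarrow> b \<in> carrier G \<Longrightarrow> a \<otimes> (inv a \<otimes> b) = b"
  by (simp add: m_assoc[symmetric])

lemma wball_carrier: "S \<subseteq> carrier G \<Longrightarrow> wball G S k \<subseteq> carrier G"
  by (induction k) auto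

lemma wball_fin: assumes "finite S" shows "finite (wball G S k)"
proof (induction k)
  case 0 then show ?case by simp
next
  case (Suc k)
  have "wball G S (Suc k) = (\<lambda>(a, s). a \<otimes> s) ` (wball G S k \<times> S)" by auto
  then show ?case using Suc assms by simp
qed

lemma wball_mult: assumes S: "S \<subseteq> carrier G" and a: "a \<in> wball G S i"
  shows "b \<in> wball G S j \<Longrightarrow> a \<otimes> b \<in> wball G S (i + j)"
proof (induction j arbitrary: b)
  case 0
  have "a \<in> carrier G" using a wball_carrier[OF S] by blast
  then show ?case using 0 a by simp
next
  case (Suc j)
  obtain b' s where b: "b = b' \<otimes> s" "b' \<in> wball G S j" "s \<in> S" using Suc.prems by auto
  have "a \<otimes> b = (a \<otimes> b') \<otimes> s"
    using b a wball_carrier[OF S] S by (simp add: m_assoc subset_iff)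
  moreover have "a \<otimes> b' \<in> wball G S (i + j)" using Suc.IH b by blast
  ultimately show ?case using b(3) by auto
qed

lemma wball_S: assumes "S \<subseteq> carrier G" "s \<in> S" shows "s \<in> wball G S 1"
proof -
  have "s = \<one> \<otimes> s" using assms by auto
  then show ?thesis using assms(2) by force
qed

lemma wball_one: assumes "\<one> \<in> S" "S \<subseteq> carrier G" shows "\<one> \<in> wball G S k"
proof (induction k)
  case 0 then show ?case by simp
next
  case (Suc k)
  have "\<one> = \<one> \<otimes> \<one>" by simp
  then show ?case using Suc assms(1) by force
qed

lemma wball_mono: assumes "\<one> \<in> S" "S \<subseteq> carrier G" "i \<le> j" "a \<in> wball G S i"
  shows "a \<in> wball G S j"
proof -
  have "a \<otimes> \<one> \<in> wball G S (i + (j - i))" using wball_mult[OF assms(2,4) wball_one[OF assms(1,2)]] .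
  moreover have "a \<in> carrier G" using assms(4) wball_carrier[OF assms(2)] by blast
  ultimately have "a \<otimes> \<one> = a" by simp
  moreover have "i + (j - i) = j" using assms(3) by simp
  ultimately show ?thesis using \<open>a \<otimes> \<one> \<in> wball G S (i + (j - i))\<close> by metis
qed

lemma wball_inv: assumes S: "S \<subseteq> carrier G" and sym: "\<And>s. s \<in> S \<Longrightarrow> inv s \<in> S"
  shows "a \<in> wball G S k \<Longrightarrow> inv a \<in> wball G S k"
proof (induction k arbitrary: a)
  case 0 then show ?case by simp
next
  case (Suc k)
  obtain a' s where a: "a = a' \<otimes> s" "a' \<in> wball G S k" "s \<in> S" using Suc.prems by auto
  have a'G: "a' \<in> carrier G" using a(2) wball_carrier[OF S] by blast
  have sG: "s \<in> carrier G" using a(3) S by blast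
  have "inv a = inv s \<otimes> inv a'" using a a'G sG by (simp add: inv_mult_group)
  moreover have "inv s \<otimes> inv a' \<in> wball G S (1 + k)"
    using wball_mult[OF S wball_S[OF S sym[OF a(3)]] Suc.IH[OF a(2)]] .
  ultimately show ?case by simp
qed

lemma wball_gen: "wball G S k \<subseteq> generate G S"
proof (induction k)
  case 0 then show ?case using generate.one by simp
next
  case (Suc k)
  show ?case
  proof
    fix x assume "x \<in> wball G S (Suc k)"
    then obtain a s where x: "x = a \<otimes> s" "a \<in> wball G S k" "s \<in> S" by auto
    have "a \<in> generate G S" using Suc x(2) by blast
    moreover have "s \<in> generate G S" using x(3) by (rule generate.incl)
    ultimately show "x \<in> generate G S" unfolding x(1) by (rule generate.eng)
  qed
qed

lemma gen_wball: assumes S: "S \<subseteq> carrier G" and sym: "\<And>s. s \<in> S \<Longrightarrow> inv s \<in> S"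
  shows "x \<in> generate G S \<Longrightarrow> \<exists>k. x \<in> wball G S k"
proof (induction rule: generate.induct)
  case one then show ?case by (intro exI[of _ 0]) simp
next
  case (incl h) then show ?case using wball_S[OF S] by blast
next
  case (inv h) then show ?case using wball_S[OF S sym] by blast
next
  case (eng h1 h2)
  then obtain k1 k2 where "h1 \<in> wball G S k1" "h2 \<in> wball G S k2" by blast
  then have "h1 \<otimes> h2 \<in> wball G S (k1 + k2)" using wball_mult[OF S] by blast
  then show ?case by blast
qed

end


context group begin

lemma main_tiling:
  assumes S: "S \<subseteq> carrier G" "finite S" "infinite (generate G S)"
    and F: "F \<subseteq> carrier G" "finite F" and n: "card (insert \<one> F) \<le> n"
  shows "\<exists>Ts. polytile G Ts \<and> fair Ts \<and> F \<subseteq> Ts!0 \<and> card (Ts!0) = n"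
proof -
  define S' where "S' = insert \<one> (S \<union> F \<union> (\<lambda>x. inv x) ` (S \<union> F))"
  have S'G: "S' \<subseteq> carrier G" unfolding S'_def using S F by auto
  have S'fin: "finite S'" unfolding S'_def using S F by auto
  have one_S': "\<one> \<in> S'" unfolding S'_def by simp
  have symS: "inv s \<in> S'" if "s \<in> S'" for s
  proof -
    have "s = \<one> \<or> s \<in> S \<union> F \<or> s \<in> (\<lambda>x. inv x) ` (S \<union> F)" using that S'_def by auto
    then show ?thesis
    proof (elim disjE)
      assume "s = \<one>" then show ?thesis using one_S' by simp
    next
      assume "s \<in> S \<union> F" then show ?thesis unfolding S'_def by blast
    next
      assume "s \<in> (\<lambda>x. inv x) ` (S \<union> F)"
      then obtain t where t: "t \<in> S \<union> F" "s = inv t" by auto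
      then have "inv s = t" using S F by auto
      then show ?thesis using t unfolding S'_def by blast
    qed
  qed
  define H where "H = generate G S'"
  have Hs: "subgroup H G" unfolding H_def using generate_is_subgroup[OF S'G] .
  have HG: "H \<subseteq> carrier G" using Hs subgroup.subset by blast
  have Hinf: "infinite H"
  proof -
    have "S \<subseteq> S'" unfolding S'_def by blast
    then have "generate G S \<subseteq> H" unfolding H_def by (rule mono_generate)
    then show ?thesis using S(3) finite_subset by blast
  qed
  define Q where "Q = insert \<one> F"
  have QH: "Q \<subseteq> H"
  proof
    fix x assume "x \<in> Q"
    then have "x = \<one> \<or> x \<in> F" unfolding Q_def by blast
    then show "x \<in> H"
    proof
      assume "x = \<one>" then show ?thesis unfolding H_def using generate.one by simp
    next
      assume "x \<in> F" then have "x \<in> S'" unfolding S'_def by blast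
      then show ?thesis unfolding H_def by (rule generate.incl)
    qed
  qed
  have QG: "Q \<subseteq> carrier G" using QH HG by blast
  have Qfin: "finite Q" unfolding Q_def using F by simp
  define lv where "lv x = (LEAST k. \<exists>q\<in>Q. inv q \<otimes> x \<in> wball G S' k)" for x
  have lv_ex: "\<exists>k. \<exists>q\<in>Q. inv q \<otimes> x \<in> wball G S' k" if xH: "x \<in> H" for x
  proof -
    obtain k where "x \<in> wball G S' k" using gen_wball[OF S'G symS] xH H_def by blast
    moreover have "inv \<one> \<otimes> x = x" using xH HG by auto
    ultimately show ?thesis unfolding Q_def by auto
  qed
  have lvI: "\<exists>q\<in>Q. inv q \<otimes> x \<in> wball G S' (lv x)" if "x \<in> H" for x
    unfolding lv_def using LeastI_ex[OF lv_ex[OF that]] .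
  have lv_le: "lv x \<le> k" if "q \<in> Q" "inv q \<otimes> x \<in> wball G S' k" for x q k
    unfolding lv_def using that by (metis (mono_tags, lifting) Least_le)
  have lv0: "lv x = 0 \<longleftrightarrow> x \<in> Q" if x: "x \<in> H" for x
  proof
    assume "lv x = 0"
    then obtain q where q: "q \<in> Q" "inv q \<otimes> x = \<one>" using lvI[OF x] by auto
    have qG: "q \<in> carrier G" using q QG by blast
    have xG: "x \<in> carrier G" using x HG by blast
    have "x = q \<otimes> \<one>" using inv_solve_left'[OF one_closed qG xG] q(2) by simp
    then have "x = q" using qG by simp
    then show "x \<in> Q" using q by simp
  next
    assume xQ: "x \<in> Q"
    have "inv x \<otimes> x \<in> wball G S' 0" using xQ QG by auto
    then show "lv x = 0" using lv_le[OF xQ] by fastforce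
  qed
  have par_ex: "\<exists>y. y \<in> H \<and> inv x \<otimes> y \<in> S' \<and> Suc (lv y) = lv x" if x: "x \<in> H" "x \<notin> Q" for x
  proof -
    have xG: "x \<in> carrier G" using x HG by blast
    obtain q where q: "q \<in> Q" "inv q \<otimes> x \<in> wball G S' (lv x)" using lvI[OF x(1)] by blast
    have qG: "q \<in> carrier G" using q QG by blast
    have "lv x \<noteq> 0" using lv0[OF x(1)] x(2) by simp
    then obtain m where m: "lv x = Suc m" by (cases "lv x") auto
    obtain a s where as: "inv q \<otimes> x = a \<otimes> s" "a \<in> wball G S' m" "s \<in> S'" using q(2) m by auto
    have aG: "a \<in> carrier G" using as(2) wball_carrier[OF S'G] by blast
    have sG: "s \<in> carrier G" using as(3) S'G by blast
    define y where "y = q \<otimes> a"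
    have yG: "y \<in> carrier G" unfolding y_def using qG aG by simp
    have yH: "y \<in> H" unfolding y_def
      using subgroup.m_closed[OF Hs] QH q(1) wball_gen[of S' m] as(2) H_def by blast
    have xeq: "x = q \<otimes> (a \<otimes> s)" using inv_solve_left'[of "a \<otimes> s" q x] as(1) qG aG sG xG by simp
    have ixy: "inv x \<otimes> y = inv s"
    proof -
      have "inv x = inv s \<otimes> (inv a \<otimes> inv q)" using xeq qG aG sG by (simp add: inv_mult_group m_assoc)
      then have "inv x \<otimes> y = inv s \<otimes> (inv a \<otimes> (inv q \<otimes> (q \<otimes> a)))"
        unfolding y_def using qG aG sG by (simp add: m_assoc)
      also have "\<dots> = inv s" using qG aG sG by (simp add: cancel_l)
      finally show ?thesis .
    qed
    have "inv q \<otimes> y = a" unfolding y_def using qG aG by (simp add: cancel_l)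
    then have le1: "lv y \<le> m" using lv_le[OF q(1)] as(2) by simp
    obtain q' where q': "q' \<in> Q" "inv q' \<otimes> y \<in> wball G S' (lv y)" using lvI[OF yH] by blast
    have q'G: "q' \<in> carrier G" using q' QG by blast
    have "inv q' \<otimes> x = (inv q' \<otimes> y) \<otimes> s"
    proof -
      have "x = y \<otimes> s" using xeq unfolding y_def using qG aG sG by (simp add: m_assoc)
      then show ?thesis using q'G yG sG by (simp add: m_assoc)
    qed
    then have "inv q' \<otimes> x \<in> wball G S' (Suc (lv y))" using q'(2) as(3) by auto
    then have "lv x \<le> Suc (lv y)" using lv_le[OF q'(1)] by blast
    then have "Suc (lv y) = lv x" using le1 m by simp
    moreover have "inv x \<otimes> y \<in> S'" using ixy symS as(3) by simp
    ultimately show ?thesis using yH by blast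
  qed
  define p where "p x = (if x \<in> Q then x else (SOME y. y \<in> H \<and> inv x \<otimes> y \<in> S' \<and> Suc (lv y) = lv x))" for x
  have p_prop: "p x \<in> H \<and> inv x \<otimes> p x \<in> S' \<and> (x \<notin> Q \<longrightarrow> Suc (lv (p x)) = lv x)" if x: "x \<in> H" for x
  proof (cases "x \<in> Q")
    case True
    then show ?thesis using x HG one_S' unfolding p_def by auto
  next
    case False
    have "p x \<in> H \<and> inv x \<otimes> p x \<in> S' \<and> Suc (lv (p x)) = lv x"
      unfolding p_def using False someI_ex[OF par_ex[OF x False]] by simp
    then show ?thesis by blast
  qed
  have "card (insert \<one> F) > 0" using F(2) by (simp add: card_gt_0_iff)
  then have n1: "1 \<le> n" using n by simp
  have PT: "ptree_n H Q p lv n"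
  proof (unfold_locales)
    show "p x \<in> H" if "x \<in> H" for x using p_prop[OF that] by blast
    show "Q \<subseteq> H" by (rule QH)
    show "finite Q" by (rule Qfin)
    show "p x = x" if "x \<in> Q" for x using that unfolding p_def by simp
    show "lv x = 0 \<longleftrightarrow> x \<in> Q" if "x \<in> H" for x using lv0[OF that] .
    show "Suc (lv (p x)) = lv x" if "x \<in> H" "x \<notin> Q" for x using p_prop[OF that(1)] that(2) by blast
    show "finite {x \<in> H. p x = v}" if "v \<in> H" for v
    proof -
      have "{x \<in> H. p x = v} \<subseteq> Q \<union> (\<lambda>s. v \<otimes> inv s) ` S'"
      proof
        fix x assume x: "x \<in> {x \<in> H. p x = v}"
        show "x \<in> Q \<union> (\<lambda>s. v \<otimes> inv s) ` S'"
        proof (cases "x \<in> Q")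
          case True then show ?thesis by simp
        next
          case False
          have xH: "x \<in> H" and pv: "p x = v" using x by auto
          have s: "inv x \<otimes> v \<in> S'" using p_prop[OF xH] pv by simp
          have xG: "x \<in> carrier G" and vG: "v \<in> carrier G" using xH that HG by auto
          have "v \<otimes> inv (inv x \<otimes> v) = x" using xG vG
            by (simp add: inv_mult_group m_assoc[symmetric])
          then show ?thesis using s by (metis UnI2 image_eqI)
        qed
      qed
      then show ?thesis using Qfin S'fin finite_subset by blast
    qed
    show "infinite H" by (rule Hinf)
    show "1 \<le> n" by (rule n1)
    show "card Q \<le> n" using n Q_def by simp
    show "Q \<noteq> {}" unfolding Q_def by simp
  qed
  obtain P where P: "\<forall>B\<in>P. card B = n" "disjoint P" "\<Union>P = H" "\<exists>B\<in>P. Q \<subseteq> B"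
    "finite {B\<in>P. \<not>(\<exists>u. \<forall>y\<in>B. \<exists>i\<le>2*n. (p^^i) y = u)}"
    using ptree_n.main_partition[OF PT] by blast
  have pw_wb: "inv ((p^^i) y) \<otimes> y \<in> wball G S' i \<and> (p^^i) y \<in> H" if y: "y \<in> H" for y i
  proof (induction i)
    case 0 then show ?case using y HG by auto
  next
    case (Suc i)
    define z where "z = (p^^i) y"
    have zH: "z \<in> H" and zw: "inv z \<otimes> y \<in> wball G S' i" unfolding z_def using Suc.IH by blast+
    have zG: "z \<in> carrier G" using zH HG by blast
    have yG: "y \<in> carrier G" using y HG by blast
    have pz: "p z \<in> H" "inv z \<otimes> p z \<in> S'" using p_prop[OF zH] by auto
    have pzG: "p z \<in> carrier G" using pz HG by blast
    have e: "inv (p z) \<otimes> y = inv (inv z \<otimes> p z) \<otimes> (inv z \<otimes> y)"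
      using zG pzG yG by (simp add: inv_mult_group m_assoc cancel_l2)
    have "inv (inv z \<otimes> p z) \<otimes> (inv z \<otimes> y) \<in> wball G S' (1 + i)"
      using wball_mult[OF S'G wball_S[OF S'G symS[OF pz(2)]] zw] .
    moreover have pe: "(p^^(Suc i)) y = p z" unfolding z_def by simp
    ultimately show ?case unfolding pe using e pz(1) by simp
  qed
  define ctr where "ctr B = (if \<one> \<in> B then \<one> else (SOME y. y \<in> B))" for B
  have Bne: "B \<noteq> {}" if "B \<in> P" for B using P(1) that n1 by fastforce
  have ctr_in: "\<forall>B\<in>P. ctr B \<in> B" unfolding ctr_def using Bne by (auto simp: some_in_eq)
  define shp where "shp B = inv (ctr B) <# B" for B
  define Ex where "Ex = {B\<in>P. \<not>(\<exists>u. \<forall>y\<in>B. \<exists>i\<le>2*n. (p^^i) y = u)}"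
  have sh_sub: "shp ` P \<subseteq> Pow (wball G S' (2*n + 2*n)) \<union> shp ` Ex"
  proof
    fix T assume "T \<in> shp ` P"
    then obtain B where B: "B \<in> P" "T = shp B" by auto
    show "T \<in> Pow (wball G S' (2*n + 2*n)) \<union> shp ` Ex"
    proof (cases "B \<in> Ex")
      case True then have "shp B \<in> shp ` Ex" by blast
      then show ?thesis using B(2) by simp
    next
      case False
      then have "\<exists>u. \<forall>y\<in>B. \<exists>i\<le>2*n. (p^^i) y = u" using B(1) unfolding Ex_def by simp
      then obtain u where u: "\<forall>y\<in>B. \<exists>i\<le>2*n. (p^^i) y = u" by blast
      have BH: "B \<subseteq> H" using B P(3) by blast
      have uw: "inv u \<otimes> y \<in> wball G S' (2*n)" if yB: "y \<in> B" for y
      proof -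
        obtain i where i: "i \<le> 2*n" "(p^^i) y = u" using u yB by blast
        have yH: "y \<in> H" using BH yB by blast
        have "inv ((p^^i) y) \<otimes> y \<in> wball G S' i" using pw_wb[OF yH, of i] by blast
        then have "inv u \<otimes> y \<in> wball G S' i" using i(2) by simp
        then show ?thesis using wball_mono[OF one_S' S'G i(1)] by blast
      qed
      have cB: "ctr B \<in> B" using ctr_in B by blast
      have uH: "u \<in> H"
      proof -
        obtain i where i: "(p^^i) (ctr B) = u" using u cB by blast
        have "(p^^i) (ctr B) \<in> H" using pw_wb[of "ctr B" i] cB BH by blast
        then show ?thesis using i by simp
      qed
      have "T \<subseteq> wball G S' (2*n + 2*n)"
      proof
        fix t assume "t \<in> T"
        then obtain y where y: "y \<in> B" "t = inv (ctr B) \<otimes> y" using B shp_def unfolding l_coset_def by auto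
        have uG: "u \<in> carrier G" and cG: "ctr B \<in> carrier G" and yG: "y \<in> carrier G"
          using uH cB y BH HG by auto
        have "t = inv (inv u \<otimes> ctr B) \<otimes> (inv u \<otimes> y)"
          using y uG cG yG by (simp add: inv_mult_group m_assoc cancel_l2)
        moreover have "inv (inv u \<otimes> ctr B) \<in> wball G S' (2*n)"
          using wball_inv[OF S'G symS uw[OF cB]] .
        then have "inv (inv u \<otimes> ctr B) \<otimes> (inv u \<otimes> y) \<in> wball G S' (2*n + 2*n)"
          by (rule wball_mult[OF S'G _ uw[OF y(1)]])
        ultimately show "t \<in> wball G S' (2*n + 2*n)" by (simp only:)
      qed
      then show ?thesis using B by blast
    qed
  qed
  have "finite (Pow (wball G S' (2*n + 2*n)) \<union> shp ` Ex)"
    using wball_fin[OF S'fin] P(5) unfolding Ex_def by simp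
  then have "finite (shp ` P)" using finite_subset[OF sh_sub] by blast
  then have shf: "finite ((\<lambda>B. inv (ctr B) <# B) ` P)" unfolding shp_def by simp
  obtain B0 where B0: "B0 \<in> P" "Q \<subseteq> B0" using P(4) by blast
  have c0: "ctr B0 = \<one>" using B0 Q_def ctr_def by auto
  show ?thesis
    using tiling_from_partition[OF Hs n1 P(1) P(2) P(3) ctr_in shf B0(1) _ c0] B0 Q_def by blast
qed

end

theorem theorem6p5:
  fixes G :: "('a, 'b) monoid_scheme"
  assumes "group G"
    and "countable (carrier G)"
    and "\<not> locally_finite_group G"
  shows "(\<forall>n::nat. n \<ge> 1 \<longrightarrow>
            (\<exists>Ts. polytile G Ts \<and> fair Ts \<and> card (Ts ! 0) = n))
       \<and> (\<forall>F. F \<subseteq> carrier G \<and> finite F \<longrightarrow>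
            (\<exists>N. \<forall>n\<ge>N. \<exists>Ts. polytile G Ts \<and> fair Ts \<and> F \<subseteq> Ts ! 0 \<and> card (Ts ! 0) = n))"
proof -
  interpret group G by (rule assms(1))
  obtain S where S: "S \<subseteq> carrier G" "finite S" "infinite (generate G S)"
    using assms(3) unfolding locally_finite_group_def by blast
  show ?thesis
  proof (intro conjI allI impI)
    fix n :: nat assume "n \<ge> 1"
    then have "card (insert \<one>\<^bsub>G\<^esub> {}) \<le> n" by simp
    then show "\<exists>Ts. polytile G Ts \<and> fair Ts \<and> card (Ts ! 0) = n"
      using main_tiling[OF S, of "{}" n] by blast
  next
    fix F assume F: "F \<subseteq> carrier G \<and> finite F"
    show "\<exists>N. \<forall>n\<ge>N. \<exists>Ts. polytile G Ts \<and> fair Ts \<and> F \<subseteq> Ts ! 0 \<and> card (Ts ! 0) = n"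
      using main_tiling[OF S] F by (intro exI[of _ "card (insert \<one>\<^bsub>G\<^esub> F)"]) blast
  qed
qed


end
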